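(* Suppose there is $x_0\in\mathbb{R}$ such that $k^2$ is continuous and piecewise continuously differentiable, nonincreasing on $(-\infty,x_0]$ and nondecreasing on $[x_0,\infty)$, with minimum value $k^2_{\min}$ (which may be negative). Let $\Delta>0$ satisfy $k^2_{\min}\le\Delta^2\le\min\{k_{+\infty}^2,k_{-\infty}^2\}$. Then $$T\ \ge\ \mathrm{sech}^2\left\{\frac12\ln\frac{k_{+\infty}k_{-\infty}}{\Delta^2}+\frac{\max_x\sqrt{\max\{0,\Delta^2-k^2(x)\}}}{\Delta}+\int_{\{x:\,k^2(x)<\Delta^2\}}\sqrt{\Delta^2-k^2}\;\mathrm{d}x\right\}.$$
   Context: Standing setup: $k^2:\mathbb{R}\to\mathbb{R}$ is a piecewise continuous function (it may be negative somewhere) with $k^2(x)\to k_{\pm\infty}^2$ as $x\to\pm\infty$, where $k_{\pm\infty}>0$ and $k^2-k_{\pm\infty}^2$ is integrable near $\pm\infty$. For the equation $u''+k^2(x)u=0$ there is a solution with $u(x)=e^{ik_{-\infty}x}+r\,e^{-ik_{-\infty}x}+o(1)$ as $x\to-\infty$ and $u(x)=\tau\,e^{ik_{+\infty}x}+o(1)$ as $x\to+\infty$; the transmission probability is $T=(k_{+\infty}/k_{-\infty})|\tau|^2$. Here $\mathrm{sech}=1/\cosh$. *)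

theory Defs
  imports "HOL-Analysis.Analysis"
begin

definition sech :: "real \<Rightarrow> real" where
  "sech x = 1 / cosh x"

end

theory Submission
  imports Defs
begin

lemma lip_vd:
  fixes f :: "real \<Rightarrow> 'a::real_normed_vector"
  assumes "a \<le> b" and d: "\<And>t. t \<in> {a..b} \<Longrightarrow> (f has_vector_derivative f' t) (at t)"
    and B: "\<And>t. t \<in> {a..b} \<Longrightarrow> norm (f' t) \<le> B"
  shows "norm (f b - f a) \<le> B * (b - a)"
proof -
  have "norm (f b - f a) \<le> B * norm (b - a)"
  proof (rule differentiable_bound[where S="{a..b}" and f'="\<lambda>t h. h *\<^sub>R f' t"])
    fix x assume x: "x \<in> {a..b}"
    show "(f has_derivative (\<lambda>h. h *\<^sub>R f' x)) (at x within {a..b})"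
      using d[OF x] by (simp add: has_vector_derivative_def has_derivative_at_withinI)
    have "onorm (\<lambda>h. h *\<^sub>R f' x) = onorm (\<lambda>h::real. h) * norm (f' x)"
      by (rule onorm_scaleR_left) (rule bounded_linear_ident)
    also have "\<dots> = norm (f' x)" using onorm_id[where 'a=real] by (simp add: id_def)
    finally show "onorm (\<lambda>h. h *\<^sub>R f' x) \<le> B" using B[OF x] by simp
  qed (use assms in auto)
  then show ?thesis using assms by simp
qed

lemma mono_fin:
  fixes f :: "real \<Rightarrow> real"
  assumes "a \<le> b" "finite S" "continuous_on {a..b} f"
    and d: "\<And>x. x \<in> {a<..<b} \<Longrightarrow> x \<notin> S \<Longrightarrow> (f has_real_derivative f' x) (at x) \<and> f' x \<ge> 0"
  shows "f a \<le> f b"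
proof -
  define g where "g x = (if x \<in> S \<union> {a,b} then 0 else f' x)" for x
  have "(g has_integral (f b - f a)) {a..b}"
  proof (rule fundamental_theorem_of_calculus_strong[where S="S \<union> {a,b}"])
    fix x assume x: "x \<in> {a..b} - (S \<union> {a,b})"
    then have "x \<in> {a<..<b}" "x \<notin> S" by auto
    then have "(f has_real_derivative f' x) (at x)" using d by blast
    then show "(f has_vector_derivative g x) (at x)" using x
      by (simp add: g_def has_real_derivative_iff_has_vector_derivative)
  qed (use assms in auto)
  moreover have "\<And>x. x \<in> {a..b} \<Longrightarrow> 0 \<le> g x" using d by (auto simp: g_def)
  ultimately show ?thesis using has_integral_nonneg[of g "f b - f a" "{a..b}"] by simp
qed

lemma deriv_nonneg_mono:
  fixes f :: "real \<Rightarrow> real"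
  assumes "DERIV f x :> D" "x < b" and m: "\<And>y. x \<le> y \<Longrightarrow> y < b \<Longrightarrow> f x \<le> f y"
  shows "D \<ge> 0"
proof (rule ccontr)
  assume "\<not> D \<ge> 0"
  then obtain d where d: "d > 0" "\<And>h. h > 0 \<Longrightarrow> h < d \<Longrightarrow> f x > f (x + h)"
    using DERIV_neg_dec_right[OF assms(1)] by force
  define h where "h = min (d/2) ((b - x)/2)"
  have "h \<le> (b - x)/2" "h \<le> d/2" unfolding h_def by (rule min.cobounded2, rule min.cobounded1)
  moreover have "h > 0" using d assms by (auto simp: h_def)
  ultimately have "h > 0" "h < d" "x + h < b" using d(1) assms(2) by auto
  then show False using d(2)[of h] m[of "x+h"] by auto
qed

lemma deriv_nonpos_mono:
  fixes f :: "real \<Rightarrow> real"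
  assumes "DERIV f x :> D" "a < x" and m: "\<And>y. a < y \<Longrightarrow> y \<le> x \<Longrightarrow> f x \<le> f y"
  shows "D \<le> 0"
proof (rule ccontr)
  assume "\<not> D \<le> 0"
  then obtain d where d: "d > 0" "\<And>h. h > 0 \<Longrightarrow> h < d \<Longrightarrow> f (x - h) < f x"
    using DERIV_pos_inc_left[OF assms(1)] by force
  define h where "h = min (d/2) ((x - a)/2)"
  have "h \<le> (x - a)/2" "h \<le> d/2" unfolding h_def by (rule min.cobounded2, rule min.cobounded1)
  moreover have "h > 0" using d assms by (auto simp: h_def)
  ultimately have "h > 0" "h < d" "a < x - h" using d(1) assms(2) by auto
  then show False using d(2)[of h] m[of "x-h"] by auto
qed

lemma finite_no3:
  fixes A :: "real set"
  assumes "\<And>a b c. a \<in> A \<Longrightarrow> b \<in> A \<Longrightarrow> c \<in> A \<Longrightarrow> a < b \<Longrightarrow> b < c \<Longrightarrow> False"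
  shows "finite A"
proof (rule ccontr)
  assume inf: "infinite A"
  then obtain a where a: "a \<in> A" using infinite_imp_nonempty by blast
  have "infinite (A - {a})" using inf by simp
  then obtain b where b: "b \<in> A" "b \<noteq> a" using infinite_imp_nonempty by blast
  have "infinite (A - {a, b})" using inf by simp
  then obtain c where c: "c \<in> A" "c \<noteq> a" "c \<noteq> b" using infinite_imp_nonempty by blast
  show False using assms[of a b c] assms[of a c b] assms[of b a c] assms[of b c a]
    assms[of c a b] assms[of c b a] a b c by linarith
qed



lemma landau_step:
  fixes w w' w'' :: "real \<Rightarrow> 'a::real_normed_vector"
  assumes d1: "\<And>t. (w has_vector_derivative w' t) (at t)"
    and d2: "\<And>t. (w' has_vector_derivative w'' t) (at t)"
    and ab: "a \<le> b" and M: "\<And>t. t \<in> {a..b} \<Longrightarrow> norm (w'' t) \<le> M"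
    and c: "c = a \<or> c = b"
  shows "norm (w' c) * (b - a) \<le> norm (w b) + norm (w a) + M * (b - a) * (b - a)"
proof -
  have M0: "M \<ge> 0" using M[of a] ab by (meson atLeastAtMost_iff norm_ge_zero order.trans order_refl)
  have c_in: "c \<in> {a..b}" using c ab by auto
  define g where "g t = w t - t *\<^sub>R w' c" for t
  have gd: "(g has_vector_derivative (w' t - w' c)) (at t)" for t
    unfolding g_def using d1[of t]
    by (auto intro!: derivative_eq_intros)
  have bnd: "norm (w' t - w' c) \<le> M * (b - a)" if t: "t \<in> {a..b}" for t
  proof (cases "c \<le> t")
    case True
    have "norm (w' t - w' c) \<le> M * (t - c)"
      by (rule lip_vd[OF True d2]) (use M t c_in in auto)
    also have "\<dots> \<le> M * (b - a)" using M0 t c_in by (intro mult_left_mono) auto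
    finally show ?thesis .
  next
    case False
    have "norm (w' c - w' t) \<le> M * (c - t)"
      by (rule lip_vd[OF _ d2]) (use False M t c_in in auto)
    also have "\<dots> \<le> M * (b - a)" using M0 t c_in by (intro mult_left_mono) auto
    finally show ?thesis by (simp add: norm_minus_commute)
  qed
  have "norm (g b - g a) \<le> (M * (b - a)) * (b - a)"
    by (rule lip_vd[OF ab gd bnd])
  moreover have "g b - g a = (w b - w a) - (b - a) *\<^sub>R w' c"
    by (simp add: g_def algebra_simps)
  ultimately have "norm ((b - a) *\<^sub>R w' c) \<le> norm (w b - w a) + M * (b - a) * (b - a)"
    by (metis (no_types, lifting) add.commute norm_triangle_sub order_trans add_left_mono norm_minus_commute)
  moreover have "norm (w b - w a) \<le> norm (w b) + norm (w a)" by (rule norm_triangle_ineq4)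
  moreover have "norm ((b - a) *\<^sub>R w' c) = norm (w' c) * (b - a)" using ab by simp
  ultimately show ?thesis by linarith
qed

lemma landau_top:
  fixes w w' w'' :: "real \<Rightarrow> 'a::real_normed_vector"
  assumes d1: "\<And>t. (w has_vector_derivative w' t) (at t)"
    and d2: "\<And>t. (w' has_vector_derivative w'' t) (at t)"
    and l0: "(w \<longlongrightarrow> 0) at_top" and l2: "(w'' \<longlongrightarrow> 0) at_top"
  shows "(w' \<longlongrightarrow> 0) at_top"
proof (rule tendstoI)
  fix e :: real assume e: "e > 0"
  have "eventually (\<lambda>t. norm (w t) < e/3) at_top" using tendstoD[OF l0, of "e/3"] e by simp
  moreover have "eventually (\<lambda>t. norm (w'' t) < e/3) at_top" using tendstoD[OF l2, of "e/3"] e by simp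
  ultimately have "eventually (\<lambda>t. norm (w t) < e/3 \<and> norm (w'' t) < e/3) at_top"
    by (rule eventually_conj)
  then obtain N where N: "\<And>t. t \<ge> N \<Longrightarrow> norm (w t) < e/3 \<and> norm (w'' t) < e/3"
    by (auto simp: eventually_at_top_linorder)
  show "eventually (\<lambda>t. dist (w' t) 0 < e) at_top"
    unfolding eventually_at_top_linorder
  proof (intro exI allI impI)
    fix t assume t: "t \<ge> N"
    have "norm (w' t) * ((t+1) - t) \<le> norm (w (t+1)) + norm (w t) + (e/3) * ((t+1) - t) * ((t+1) - t)"
      by (rule landau_step[OF d1 d2]) (use N t in \<open>auto intro: less_imp_le\<close>)
    moreover have "norm (w (t+1)) < e/3" "norm (w t) < e/3" using N t by auto
    ultimately show "dist (w' t) 0 < e" by simp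
  qed
qed

lemma landau_bot:
  fixes w w' w'' :: "real \<Rightarrow> 'a::real_normed_vector"
  assumes d1: "\<And>t. (w has_vector_derivative w' t) (at t)"
    and d2: "\<And>t. (w' has_vector_derivative w'' t) (at t)"
    and l0: "(w \<longlongrightarrow> 0) at_bot" and l2: "(w'' \<longlongrightarrow> 0) at_bot"
  shows "(w' \<longlongrightarrow> 0) at_bot"
proof (rule tendstoI)
  fix e :: real assume e: "e > 0"
  have "eventually (\<lambda>t. norm (w t) < e/3) at_bot" using tendstoD[OF l0, of "e/3"] e by simp
  moreover have "eventually (\<lambda>t. norm (w'' t) < e/3) at_bot" using tendstoD[OF l2, of "e/3"] e by simp
  ultimately have "eventually (\<lambda>t. norm (w t) < e/3 \<and> norm (w'' t) < e/3) at_bot"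
    by (rule eventually_conj)
  then obtain N where N: "\<And>t. t \<le> N \<Longrightarrow> norm (w t) < e/3 \<and> norm (w'' t) < e/3"
    by (auto simp: eventually_at_bot_linorder)
  show "eventually (\<lambda>t. dist (w' t) 0 < e) at_bot"
    unfolding eventually_at_bot_linorder
  proof (intro exI allI impI)
    fix t assume t: "t \<le> N"
    have "norm (w' t) * (t - (t - 1)) \<le> norm (w t) + norm (w (t - 1)) + (e/3) * (t - (t-1)) * (t - (t-1))"
      by (rule landau_step[OF d1 d2]) (use N t in \<open>auto intro: less_imp_le\<close>)
    moreover have "norm (w (t - 1)) < e/3" "norm (w t) < e/3" using N t by auto
    ultimately show "dist (w' t) 0 < e" by simp
  qed
qed

lemma exp_vd:
  fixes c :: complex and k :: real
  shows "((\<lambda>x. exp (c * complex_of_real (k * x))) has_vector_derivative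
            (c * of_real k * exp (c * complex_of_real (k * x)))) (at x)"
proof -
  have "((\<lambda>z. exp ((c * of_real k) * z)) has_field_derivative
          ((c * of_real k) * exp ((c * of_real k) * of_real x))) (at (of_real x))"
    by (auto intro!: derivative_eq_intros)
  from has_vector_derivative_real_field[OF this]
  show ?thesis by (simp add: algebra_simps)
qed



lemma asym:
  fixes u u' :: "real \<Rightarrow> complex" and q :: "real \<Rightarrow> real" and k :: real and a b :: complex
  assumes F: "F = at_top \<or> F = at_bot"
    and ud: "\<And>x. (u has_vector_derivative u' x) (at x)"
    and u'd: "\<And>x. (u' has_vector_derivative (- (complex_of_real (q x) * u x))) (at x)"
    and ql: "(q \<longlongrightarrow> k\<^sup>2) F"
    and ul: "((\<lambda>x. u x - (a * exp (\<i> * complex_of_real (k * x)) + b * exp (- \<i> * complex_of_real (k * x)))) \<longlongrightarrow> 0) F"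
  shows "((\<lambda>x. u' x - \<i> * of_real k * (a * exp (\<i> * complex_of_real (k * x)) - b * exp (- \<i> * complex_of_real (k * x)))) \<longlongrightarrow> 0) F"
proof -
  define e where "e x = exp (\<i> * complex_of_real (k * x))" for x
  define f where "f x = exp (- \<i> * complex_of_real (k * x))" for x
  have ed: "(e has_vector_derivative (\<i> * of_real k * e x)) (at x)" for x
    unfolding e_def by (rule exp_vd)
  have fd: "(f has_vector_derivative (- \<i> * of_real k * f x)) (at x)" for x
    unfolding f_def by (rule exp_vd)
  define w where "w x = u x - (a * e x + b * f x)" for x
  define w' where "w' x = u' x - \<i> * of_real k * (a * e x - b * f x)" for x
  define w'' where "w'' x = - (complex_of_real (q x) * u x) + of_real (k\<^sup>2) * (a * e x + b * f x)" for x
  have wd: "(w has_vector_derivative w' x) (at x)" for x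
  proof -
    have "((\<lambda>x. u x - (a * e x + b * f x)) has_vector_derivative
        (u' x - (a * (\<i> * of_real k * e x) + b * (- \<i> * of_real k * f x)))) (at x)"
      by (intro derivative_intros ud ed fd)
    then show ?thesis unfolding w_def w'_def by (simp add: algebra_simps)
  qed
  have w'd: "(w' has_vector_derivative w'' x) (at x)" for x
  proof -
    have "((\<lambda>x. u' x - \<i> * of_real k * (a * e x - b * f x)) has_vector_derivative
        (- (complex_of_real (q x) * u x) - \<i> * of_real k * (a * (\<i> * of_real k * e x) - b * (- \<i> * of_real k * f x)))) (at x)"
      by (intro derivative_intros u'd ed fd)
    moreover have "- (complex_of_real (q x) * u x) - \<i> * of_real k * (a * (\<i> * of_real k * e x) - b * (- \<i> * of_real k * f x))
        = w'' x"
      unfolding w''_def by (simp add: algebra_simps power2_eq_square)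
    ultimately show ?thesis unfolding w'_def by simp
  qed
  have wl: "(w \<longlongrightarrow> 0) F" using ul unfolding w_def e_def f_def .
  have ne: "norm (e x) = 1" "norm (f x) = 1" for x by (simp_all add: e_def f_def)
  have w''eq: "w'' x = - (of_real (q x - k\<^sup>2) * u x) - of_real (k\<^sup>2) * w x" for x
    unfolding w''_def w_def by (simp add: algebra_simps)
  have ev: "eventually (\<lambda>x. norm (u x) \<le> 1 + norm a + norm b) F"
  proof -
    have "eventually (\<lambda>x. norm (w x) < 1) F" using tendstoD[OF wl, of 1] by simp
    then show ?thesis
    proof (rule eventually_mono)
      fix x assume "norm (w x) < 1"
      moreover have "u x = w x + (a * e x + b * f x)" by (simp add: w_def)
      moreover have "norm (a * e x + b * f x) \<le> norm a + norm b"
        using norm_triangle_ineq[of "a * e x" "b * f x"] by (simp add: norm_mult ne)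
      moreover have "norm (u x) \<le> norm (w x) + norm (a * e x + b * f x)"
        using norm_triangle_ineq calculation(2) by metis
      ultimately show "norm (u x) \<le> 1 + norm a + norm b" by linarith
    qed
  qed
  have l1: "((\<lambda>x. of_real (q x - k\<^sup>2) * u x) \<longlongrightarrow> 0) F"
  proof (rule Lim_null_comparison)
    show "eventually (\<lambda>x. norm (of_real (q x - k\<^sup>2) * u x) \<le> \<bar>q x - k\<^sup>2\<bar> * (1 + norm a + norm b)) F"
      using ev apply eventually_elim apply (simp only: norm_mult norm_of_real)
      by (rule mult_left_mono) auto
    have "((\<lambda>x. q x - k\<^sup>2) \<longlongrightarrow> 0) F" using ql by (simp add: LIM_zero)
    then have "((\<lambda>x. \<bar>q x - k\<^sup>2\<bar>) \<longlongrightarrow> 0) F" using tendsto_rabs_zero by blast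
    then show "((\<lambda>x. \<bar>q x - k\<^sup>2\<bar> * (1 + norm a + norm b)) \<longlongrightarrow> 0) F"
      using tendsto_mult_left_zero by blast
  qed
  have w''l: "(w'' \<longlongrightarrow> 0) F"
  proof -
    have "((\<lambda>x. - (of_real (q x - k\<^sup>2) * u x) - of_real (k\<^sup>2) * w x) \<longlongrightarrow> - 0 - of_real (k\<^sup>2) * 0) F"
      by (intro tendsto_intros l1 wl)
    then show ?thesis unfolding w''eq by simp
  qed
  have "(w' \<longlongrightarrow> 0) F"
    using F landau_top[OF wd w'd] landau_bot[OF wd w'd] wl w''l by auto
  then show ?thesis unfolding w'_def e_def f_def .
qed

lemma cmod_pm:
  fixes v w :: complex and k :: real
  shows "(cmod (w + \<i> * of_real k * v))\<^sup>2 - (cmod (w - \<i> * of_real k * v))\<^sup>2 = 4 * k * Im (cnj v * w)"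
    and "(cmod (w + \<i> * of_real k * v))\<^sup>2 + (cmod (w - \<i> * of_real k * v))\<^sup>2 = 2 * ((cmod w)\<^sup>2 + k\<^sup>2 * (cmod v)\<^sup>2)"
  unfolding cmod_power2 by (simp_all add: algebra_simps power2_eq_square)



lemma Re_vd: "(f has_vector_derivative f') (at x) \<Longrightarrow> ((\<lambda>x. Re (f x)) has_real_derivative Re f') (at x)"
  by (simp add: has_vector_derivative_complex_iff)
lemma Im_vd: "(f has_vector_derivative f') (at x) \<Longrightarrow> ((\<lambda>x. Im (f x)) has_real_derivative Im f') (at x)"
  by (simp add: has_vector_derivative_complex_iff)

lemma cmod_sq_Re: "(cmod z)\<^sup>2 = Re (cnj z * z)"
  unfolding cmod_power2 by (simp add: power2_eq_square)

locale sc =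
  fixes q :: "real \<Rightarrow> real" and kp km x0 \<Delta> :: real
    and u u' :: "real \<Rightarrow> complex" and r \<tau> :: complex
  assumes kp_pos: "kp > 0" and km_pos: "km > 0"
    and lim_top: "(q \<longlongrightarrow> kp\<^sup>2) at_top"
    and lim_bot: "(q \<longlongrightarrow> km\<^sup>2) at_bot"
    and pC1: "q piecewise_C1_differentiable_on UNIV"
    and noninc: "\<And>x y. x \<le> y \<Longrightarrow> y \<le> x0 \<Longrightarrow> q y \<le> q x"
    and nondec: "\<And>x y. x0 \<le> x \<Longrightarrow> x \<le> y \<Longrightarrow> q x \<le> q y"
    and Delta_pos: "\<Delta> > 0"
    and Delta_lo: "q x0 \<le> \<Delta>\<^sup>2"
    and Delta_hi: "\<Delta>\<^sup>2 \<le> min (kp\<^sup>2) (km\<^sup>2)"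
    and u_deriv: "\<And>x. (u has_vector_derivative u' x) (at x)"
    and u'_deriv: "\<And>x. (u' has_vector_derivative (- (complex_of_real (q x) * u x))) (at x)"
    and asym_bot: "((\<lambda>x. u x - (exp (\<i> * complex_of_real (km * x))
                        + r * exp (- \<i> * complex_of_real (km * x)))) \<longlongrightarrow> 0) at_bot"
    and asym_top: "((\<lambda>x. u x - \<tau> * exp (\<i> * complex_of_real (kp * x))) \<longlongrightarrow> 0) at_top"
begin

lemma q_cont: "continuous_on UNIV q"
  using pC1 by (simp add: piecewise_C1_differentiable_on_def)

lemma q_isCont: "isCont q x"
  using q_cont by (simp add: continuous_on_eq_continuous_at)

lemma q_pc: obtains S qd where "finite S" "\<And>x. x \<notin> S \<Longrightarrow> (q has_real_derivative qd x) (at x)"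
proof -
  obtain S where S: "finite S" "q C1_differentiable_on UNIV - S"
    using pC1 by (auto simp: piecewise_C1_differentiable_on_def)
  then obtain D where "\<And>x. x \<in> UNIV - S \<Longrightarrow> (q has_vector_derivative D x) (at x)"
    by (auto simp: C1_differentiable_on_def)
  then show ?thesis using that[OF S(1)] by (auto simp: has_real_derivative_iff_has_vector_derivative)
qed

lemma q_min: "q x0 \<le> q x"
  by (cases "x \<le> x0") (auto intro: noninc nondec)

lemma q_le_km: "x \<le> x0 \<Longrightarrow> q x \<le> km\<^sup>2"
  by (rule tendsto_lowerbound[OF lim_bot])
     (auto simp: eventually_at_bot_linorder intro!: exI[of _ x] noninc)

lemma q_le_kp: "x0 \<le> x \<Longrightarrow> q x \<le> kp\<^sup>2"
  by (rule tendsto_lowerbound[OF lim_top])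
     (auto simp: eventually_at_top_linorder intro!: exI[of _ x] nondec)

lemma q_bound: "\<bar>q x\<bar> \<le> \<bar>q x0\<bar> + kp\<^sup>2 + km\<^sup>2"
proof -
  have "q x \<le> kp\<^sup>2 + km\<^sup>2" using q_le_km[of x] q_le_kp[of x]
    by (cases "x \<le> x0") (auto simp: add_increasing add_increasing2)
  then show ?thesis using q_min[of x] abs_ge_self[of "q x0"] abs_ge_minus_self[of "q x0"]
      zero_le_power2[of kp] zero_le_power2[of km] unfolding abs_le_iff by linarith
qed

lemma qd_left: assumes "(q has_real_derivative D) (at x)" "x < x0" shows "D \<le> 0"
  by (rule deriv_nonpos_mono[OF assms(1), of "x - 1"]) (use assms in \<open>auto intro: noninc\<close>)

lemma qd_right: assumes "(q has_real_derivative D) (at x)" "x0 < x" shows "D \<ge> 0"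
  by (rule deriv_nonneg_mono[OF assms(1), of "x + 1"]) (use assms in \<open>auto intro: nondec\<close>)

definition "U x = (cmod (u x))\<^sup>2"
definition "V x = (cmod (u' x))\<^sup>2"
definition "P x = Re (cnj (u x) * u' x)"
definition "J = Im (cnj (u 0) * u' 0)"

lemma U_deriv: "(U has_real_derivative 2 * P x) (at x)"
proof -
  have "((\<lambda>x. Re (cnj (u x) * u x)) has_real_derivative Re (cnj (u x) * u' x + cnj (u' x) * u x)) (at x)"
    using Re_vd[OF has_vector_derivative_mult[OF has_vector_derivative_cnj[OF u_deriv] u_deriv]]
    by (simp add: algebra_simps)
  moreover have "Re (cnj (u x) * u' x + cnj (u' x) * u x) = 2 * P x"
    by (simp add: P_def)
  ultimately show ?thesis unfolding U_def cmod_sq_Re by simp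
qed

lemma V_deriv: "(V has_real_derivative - 2 * q x * P x) (at x)"
proof -
  have "((\<lambda>x. Re (cnj (u' x) * u' x)) has_real_derivative
      Re (cnj (u' x) * (- (complex_of_real (q x) * u x)) + cnj (- (complex_of_real (q x) * u x)) * u' x)) (at x)"
    using Re_vd[OF has_vector_derivative_mult[OF has_vector_derivative_cnj[OF u'_deriv] u'_deriv]]
    by (simp add: algebra_simps)
  moreover have "Re (cnj (u' x) * (- (complex_of_real (q x) * u x)) + cnj (- (complex_of_real (q x) * u x)) * u' x)
      = - 2 * q x * P x"
    by (simp add: P_def algebra_simps)
  ultimately show ?thesis unfolding V_def cmod_sq_Re by simp
qed

lemma P_deriv: "(P has_real_derivative V x - q x * U x) (at x)"
proof -
  have "((\<lambda>x. Re (cnj (u x) * u' x)) has_real_derivative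
      Re (cnj (u x) * (- (complex_of_real (q x) * u x)) + cnj (u' x) * u' x)) (at x)"
    using Re_vd[OF has_vector_derivative_mult[OF has_vector_derivative_cnj[OF u_deriv] u'_deriv]]
    by (simp add: algebra_simps)
  moreover have "Re (cnj (u x) * (- (complex_of_real (q x) * u x)) + cnj (u' x) * u' x) = V x - q x * U x"
    by (simp add: V_def U_def cmod_sq_Re algebra_simps)
  ultimately show ?thesis unfolding P_def by simp
qed

lemma J_const: "Im (cnj (u x) * u' x) = J"
proof -
  have "\<forall>x. ((\<lambda>x. Im (cnj (u x) * u' x)) has_real_derivative 0) (at x)"
  proof
    fix x
    have "((\<lambda>x. Im (cnj (u x) * u' x)) has_real_derivative
      Im (cnj (u x) * (- (complex_of_real (q x) * u x)) + cnj (u' x) * u' x)) (at x)"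
      using Im_vd[OF has_vector_derivative_mult[OF has_vector_derivative_cnj[OF u_deriv] u'_deriv]]
      by (simp add: algebra_simps)
    moreover have "Im (cnj (u x) * (- (complex_of_real (q x) * u x)) + cnj (u' x) * u' x) = 0"
      by (simp add: algebra_simps)
    ultimately show "((\<lambda>x. Im (cnj (u x) * u' x)) has_real_derivative 0) (at x)" by simp
  qed
  then show ?thesis unfolding J_def by (rule DERIV_isconst_all)
qed

lemma PJ: "(P x)\<^sup>2 + J\<^sup>2 = U x * V x"
proof -
  have "(P x)\<^sup>2 + J\<^sup>2 = (cmod (cnj (u x) * u' x))\<^sup>2"
    unfolding P_def J_const[of x, symmetric] by (simp add: cmod_power2)
  also have "\<dots> = U x * V x" by (simp add: U_def V_def norm_mult power_mult_distrib)
  finally show ?thesis .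
qed

lemma U_nn: "U x \<ge> 0" and V_nn: "V x \<ge> 0" by (simp_all add: U_def V_def)

end


lemma AB_lim:
  fixes u u' :: "real \<Rightarrow> complex" and k :: real and a b :: complex
  assumes k: "k \<ge> 0"
    and ul: "((\<lambda>x. u x - (a * exp (\<i> * complex_of_real (k * x)) + b * exp (- \<i> * complex_of_real (k * x)))) \<longlongrightarrow> 0) F"
    and u'l: "((\<lambda>x. u' x - \<i> * of_real k * (a * exp (\<i> * complex_of_real (k * x)) - b * exp (- \<i> * complex_of_real (k * x)))) \<longlongrightarrow> 0) F"
  shows "((\<lambda>x. cmod (u' x + \<i> * of_real k * u x)) \<longlongrightarrow> 2 * k * cmod a) F"
    and "((\<lambda>x. cmod (u' x - \<i> * of_real k * u x)) \<longlongrightarrow> 2 * k * cmod b) F"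
proof -
  define e where "e x = exp (\<i> * complex_of_real (k * x))" for x
  define f where "f x = exp (- \<i> * complex_of_real (k * x))" for x
  have ne: "cmod (e x) = 1" "cmod (f x) = 1" for x by (simp_all add: e_def f_def)
  define d1 where "d1 x = u x - (a * e x + b * f x)" for x
  define d2 where "d2 x = u' x - \<i> * of_real k * (a * e x - b * f x)" for x
  have l1: "(d1 \<longlongrightarrow> 0) F" using ul unfolding d1_def e_def f_def .
  have l2: "(d2 \<longlongrightarrow> 0) F" using u'l unfolding d2_def e_def f_def .
  have lA0: "((\<lambda>x. d2 x + \<i> * of_real k * d1 x) \<longlongrightarrow> 0 + \<i> * of_real k * 0) F"
    by (intro tendsto_intros l1 l2)
  have lB0: "((\<lambda>x. d2 x - \<i> * of_real k * d1 x) \<longlongrightarrow> 0 - \<i> * of_real k * 0) F"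
    by (intro tendsto_intros l1 l2)
  have lA: "((\<lambda>x. d2 x + \<i> * of_real k * d1 x) \<longlongrightarrow> 0) F" using lA0 by simp
  have lB: "((\<lambda>x. d2 x - \<i> * of_real k * d1 x) \<longlongrightarrow> 0) F" using lB0 by simp
  have eA: "u' x + \<i> * of_real k * u x - 2 * \<i> * of_real k * a * e x = d2 x + \<i> * of_real k * d1 x" for x
    by (simp add: d1_def d2_def algebra_simps)
  have eB: "u' x - \<i> * of_real k * u x - (- 2 * \<i> * of_real k * b * f x) = d2 x - \<i> * of_real k * d1 x" for x
    by (simp add: d1_def d2_def algebra_simps)
  have cA: "cmod (2 * \<i> * of_real k * a * e x) = 2 * k * cmod a" for x
    using k by (simp add: norm_mult ne)
  have cB: "cmod (- 2 * \<i> * of_real k * b * f x) = 2 * k * cmod b" for x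
    using k by (simp add: norm_mult ne)
  have "((\<lambda>x. cmod (u' x + \<i> * of_real k * u x) - 2 * k * cmod a) \<longlongrightarrow> 0) F"
  proof (rule Lim_null_comparison)
    show "eventually (\<lambda>x. norm (cmod (u' x + \<i> * of_real k * u x) - 2 * k * cmod a) \<le> cmod (d2 x + \<i> * of_real k * d1 x)) F"
      by (intro always_eventually allI)
         (metis cA eA norm_triangle_ineq3 real_norm_def)
    show "((\<lambda>x. cmod (d2 x + \<i> * of_real k * d1 x)) \<longlongrightarrow> 0) F"
      using tendsto_norm_zero[OF lA] by simp
  qed
  then show "((\<lambda>x. cmod (u' x + \<i> * of_real k * u x)) \<longlongrightarrow> 2 * k * cmod a) F"
    by (rule LIM_zero_cancel)
  have "((\<lambda>x. cmod (u' x - \<i> * of_real k * u x) - 2 * k * cmod b) \<longlongrightarrow> 0) F"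
  proof (rule Lim_null_comparison)
    show "eventually (\<lambda>x. norm (cmod (u' x - \<i> * of_real k * u x) - 2 * k * cmod b) \<le> cmod (d2 x - \<i> * of_real k * d1 x)) F"
      by (intro always_eventually allI)
         (metis cB eB norm_triangle_ineq3 real_norm_def)
    show "((\<lambda>x. cmod (d2 x - \<i> * of_real k * d1 x)) \<longlongrightarrow> 0) F"
      using tendsto_norm_zero[OF lB] by simp
  qed
  then show "((\<lambda>x. cmod (u' x - \<i> * of_real k * u x)) \<longlongrightarrow> 2 * k * cmod b) F"
    by (rule LIM_zero_cancel)
qed

context sc begin

lemma ends:
  fixes k :: real and a b :: complex
  assumes F: "F = at_top \<or> F = at_bot" and k: "k > 0" and ql: "(q \<longlongrightarrow> k\<^sup>2) F"
    and ul: "((\<lambda>x. u x - (a * exp (\<i> * complex_of_real (k * x)) + b * exp (- \<i> * complex_of_real (k * x)))) \<longlongrightarrow> 0) F"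
  shows "J = k * ((cmod a)\<^sup>2 - (cmod b)\<^sup>2)"
    and "((\<lambda>x. V x + k\<^sup>2 * U x) \<longlongrightarrow> 2 * k\<^sup>2 * ((cmod a)\<^sup>2 + (cmod b)\<^sup>2)) F"
    and "((\<lambda>x. cmod (u' x + \<i> * of_real k * u x)) \<longlongrightarrow> 2 * k * cmod a) F"
    and "((\<lambda>x. cmod (u' x - \<i> * of_real k * u x)) \<longlongrightarrow> 2 * k * cmod b) F"
proof -
  have u'l: "((\<lambda>x. u' x - \<i> * of_real k * (a * exp (\<i> * complex_of_real (k * x)) - b * exp (- \<i> * complex_of_real (k * x)))) \<longlongrightarrow> 0) F"
    by (rule asym[OF F u_deriv u'_deriv ql ul])
  note AB = AB_lim[OF _ ul u'l] 
  have lA: "((\<lambda>x. cmod (u' x + \<i> * of_real k * u x)) \<longlongrightarrow> 2 * k * cmod a) F"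
    using AB(1) k by simp
  have lB: "((\<lambda>x. cmod (u' x - \<i> * of_real k * u x)) \<longlongrightarrow> 2 * k * cmod b) F"
    using AB(2) k by simp
  show "((\<lambda>x. cmod (u' x + \<i> * of_real k * u x)) \<longlongrightarrow> 2 * k * cmod a) F" by (rule lA)
  show "((\<lambda>x. cmod (u' x - \<i> * of_real k * u x)) \<longlongrightarrow> 2 * k * cmod b) F" by (rule lB)
  have nt: "\<not> trivial_limit F" using F trivial_limit_at_top_linorder trivial_limit_at_bot_linorder by metis
  have eJ: "J = ((cmod (u' x + \<i> * of_real k * u x))\<^sup>2 - (cmod (u' x - \<i> * of_real k * u x))\<^sup>2) / (4 * k)" for x
    using cmod_pm(1)[of "u' x" k "u x"] J_const[of x] k by simp
  have "((\<lambda>x. ((cmod (u' x + \<i> * of_real k * u x))\<^sup>2 - (cmod (u' x - \<i> * of_real k * u x))\<^sup>2) / (4 * k))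
     \<longlongrightarrow> ((2 * k * cmod a)\<^sup>2 - (2 * k * cmod b)\<^sup>2) / (4 * k)) F"
    by (intro tendsto_intros lA lB) (use k in simp)
  then have "((\<lambda>x. J) \<longlongrightarrow> ((2 * k * cmod a)\<^sup>2 - (2 * k * cmod b)\<^sup>2) / (4 * k)) F"
    using eJ by simp
  then have "J = ((2 * k * cmod a)\<^sup>2 - (2 * k * cmod b)\<^sup>2) / (4 * k)"
    using tendsto_const_iff[OF nt] by blast
  moreover have "(2 * k * cmod a)\<^sup>2 - (2 * k * cmod b)\<^sup>2 = (4 * k) * (k * ((cmod a)\<^sup>2 - (cmod b)\<^sup>2))"
    by (simp add: power2_eq_square algebra_simps)
  ultimately show "J = k * ((cmod a)\<^sup>2 - (cmod b)\<^sup>2)"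
    using k by simp
  have eN: "V x + k\<^sup>2 * U x = ((cmod (u' x + \<i> * of_real k * u x))\<^sup>2 + (cmod (u' x - \<i> * of_real k * u x))\<^sup>2) / 2" for x
    using cmod_pm(2)[of "u' x" k "u x"] by (simp add: U_def V_def)
  have "((\<lambda>x. ((cmod (u' x + \<i> * of_real k * u x))\<^sup>2 + (cmod (u' x - \<i> * of_real k * u x))\<^sup>2) / 2)
     \<longlongrightarrow> ((2 * k * cmod a)\<^sup>2 + (2 * k * cmod b)\<^sup>2) / 2) F"
    by (intro tendsto_intros lA lB) simp
  moreover have "((2 * k * cmod a)\<^sup>2 + (2 * k * cmod b)\<^sup>2) / 2 = 2 * k\<^sup>2 * ((cmod a)\<^sup>2 + (cmod b)\<^sup>2)"
    by (simp add: power2_eq_square algebra_simps)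
  ultimately show "((\<lambda>x. V x + k\<^sup>2 * U x) \<longlongrightarrow> 2 * k\<^sup>2 * ((cmod a)\<^sup>2 + (cmod b)\<^sup>2)) F"
    unfolding eN by simp
qed

lemma asym_top': "((\<lambda>x. u x - (\<tau> * exp (\<i> * complex_of_real (kp * x)) + 0 * exp (- \<i> * complex_of_real (kp * x)))) \<longlongrightarrow> 0) at_top"
  using asym_top by simp
lemma asym_bot': "((\<lambda>x. u x - (1 * exp (\<i> * complex_of_real (km * x)) + r * exp (- \<i> * complex_of_real (km * x)))) \<longlongrightarrow> 0) at_bot"
  using asym_bot by simp

lemmas top = ends[OF _ kp_pos lim_top asym_top', simplified]
lemmas bot = ends[OF _ km_pos lim_bot asym_bot', simplified]

end


context sc begin

lemma top_facts:
  shows "J = kp * (cmod \<tau>)\<^sup>2"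
    and "((\<lambda>x. V x + kp\<^sup>2 * U x) \<longlongrightarrow> 2 * kp\<^sup>2 * (cmod \<tau>)\<^sup>2) at_top"
  using ends[of at_top kp \<tau> 0, OF _ kp_pos lim_top asym_top'] by simp_all

lemma bot_facts:
  shows "J = km * (1 - (cmod r)\<^sup>2)"
    and "((\<lambda>x. V x + km\<^sup>2 * U x) \<longlongrightarrow> 2 * km\<^sup>2 * (1 + (cmod r)\<^sup>2)) at_bot"
    and "((\<lambda>x. cmod (u' x + \<i> * of_real km * u x)) \<longlongrightarrow> 2 * km) at_bot"
  using ends[of at_bot km 1 r, OF _ km_pos lim_bot asym_bot'] by simp_all

lemma P_le: "2 * \<bar>P x\<bar> \<le> U x + V x"
proof -
  have "(P x)\<^sup>2 \<le> U x * V x" using PJ[of x] zero_le_power2[of J] by linarith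
  moreover have "4 * (U x * V x) \<le> (U x + V x)\<^sup>2"
    using zero_le_power2[of "U x - V x"] by (simp add: power2_eq_square algebra_simps)
  ultimately have "(2 * P x)\<^sup>2 \<le> (U x + V x)\<^sup>2" by (simp add: power_mult_distrib)
  then have "\<bar>2 * P x\<bar> \<le> \<bar>U x + V x\<bar>" by (simp add: abs_le_square_iff)
  then show ?thesis using U_nn[of x] V_nn[of x] by (simp add: abs_mult)
qed

lemma U_cont: "isCont U x" and V_cont: "isCont V x"
  using DERIV_isCont[OF U_deriv] DERIV_isCont[OF V_deriv] by auto

lemma tau_nz: "\<tau> \<noteq> 0"
proof
  assume t0: "\<tau> = 0"
  define Qb where "Qb = \<bar>q x0\<bar> + kp\<^sup>2 + km\<^sup>2"
  have Qb: "\<bar>q x\<bar> \<le> Qb" for x using q_bound unfolding Qb_def .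
  have N0: "((\<lambda>x. V x + kp\<^sup>2 * U x) \<longlongrightarrow> 0) at_top" using top_facts(2) t0 by simp
  have kp2: "kp\<^sup>2 > 0" using kp_pos by simp
  have V0: "(V \<longlongrightarrow> 0) at_top"
    by (rule Lim_null_comparison[OF _ N0]) (use U_nn V_nn kp2 in \<open>auto intro!: always_eventually\<close>)
  have "((\<lambda>x. (V x + kp\<^sup>2 * U x) / kp\<^sup>2) \<longlongrightarrow> 0 / kp\<^sup>2) at_top"
    by (intro tendsto_intros N0) (use kp2 in simp)
  moreover have "norm (U x) \<le> (V x + kp\<^sup>2 * U x) / kp\<^sup>2" for x
  proof -
    have "U x * kp\<^sup>2 \<le> V x + kp\<^sup>2 * U x" using V_nn[of x] by (simp add: mult.commute)
    then show ?thesis using kp2 U_nn[of x] by (simp add: pos_le_divide_eq)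
  qed
  ultimately have U0: "(U \<longlongrightarrow> 0) at_top"
    using Lim_null_comparison[where g="\<lambda>x. (V x + kp\<^sup>2 * U x) / kp\<^sup>2" and f=U] by simp
  define e where "e x = V x + q x * U x" for x
  have qU0: "((\<lambda>x. q x * U x) \<longlongrightarrow> 0) at_top"
  proof (rule Lim_null_comparison[where g="\<lambda>x. Qb * U x"])
    show "eventually (\<lambda>x. norm (q x * U x) \<le> Qb * U x) at_top"
      by (intro always_eventually allI) (use Qb U_nn in \<open>auto simp: abs_mult intro: mult_right_mono\<close>)
    show "((\<lambda>x. Qb * U x) \<longlongrightarrow> 0) at_top" using tendsto_mult_right_zero[OF U0] .
  qed
  have e0: "(e \<longlongrightarrow> 0) at_top" unfolding e_def using tendsto_add[OF V0 qU0] by simp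
  obtain S qd where S: "finite S" "\<And>x. x \<notin> S \<Longrightarrow> (q has_real_derivative qd x) (at x)"
    using q_pc by blast
  have emono: "e y \<le> e z" if "x0 \<le> y" "y \<le> z" for y z
  proof (rule mono_fin[OF that(2) S(1)])
    show "continuous_on {y..z} e" unfolding e_def
      by (intro continuous_at_imp_continuous_on ballI continuous_intros U_cont V_cont q_isCont)
    fix x assume x: "x \<in> {y<..<z}" "x \<notin> S"
    have "(e has_real_derivative (- 2 * q x * P x + (qd x * U x + 2 * P x * q x))) (at x)"
      unfolding e_def by (rule DERIV_add[OF V_deriv DERIV_mult[OF S(2)[OF x(2)] U_deriv]])
    moreover have "- 2 * q x * P x + (qd x * U x + 2 * P x * q x) = qd x * U x" by simp
    moreover have "qd x \<ge> 0" using qd_right[OF S(2)[OF x(2)]] x that by auto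
    ultimately show "(e has_real_derivative qd x * U x) (at x) \<and> qd x * U x \<ge> 0"
      using U_nn[of x] by simp
  qed
  have ele: "e y \<le> 0" if "x0 \<le> y" for y
    by (rule tendsto_lowerbound[OF e0])
       (auto simp: eventually_at_top_linorder intro!: exI[of _ y] emono that)
  have "eventually (\<lambda>x. q x > kp\<^sup>2 / 2) at_top"
    using order_tendstoD(1)[OF lim_top, of "kp\<^sup>2/2"] kp2 by simp
  moreover have "eventually (\<lambda>x. x \<ge> x0) at_top" by simp
  ultimately obtain X where X: "q X > kp\<^sup>2/2" "X \<ge> x0"
    by (metis (mono_tags, lifting) eventually_conj eventually_happens' trivial_limit_at_top_linorder)
  have "V X + q X * U X \<le> 0" using ele[OF X(2)] by (simp add: e_def)
  moreover have "q X > 0" using X(1) kp2 by linarith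
  moreover have qU: "q X * U X \<ge> 0" using \<open>q X > 0\<close> U_nn[of X] by simp
  ultimately have VX: "V X = 0" and "q X * U X = 0" using V_nn[of X] by linarith+
  then have UX: "U X = 0" using \<open>q X > 0\<close> by simp
  define C where "C = 1 + Qb"
  define g where "g t = (U t + V t) * exp (C * t)" for t
  have gmono: "g y \<le> g X" if "y \<le> X" for y
  proof (rule DERIV_nonneg_imp_nondecreasing[OF that])
    fix x
    have ed: "((\<lambda>t. exp (C * t)) has_real_derivative exp (C * x) * C) (at x)"
      by (auto intro!: derivative_eq_intros)
    have "(g has_real_derivative ((2 * P x + - 2 * q x * P x) * exp (C * x) + (exp (C * x) * C) * (U x + V x))) (at x)"
      unfolding g_def by (rule DERIV_mult[OF DERIV_add[OF U_deriv V_deriv] ed])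
    moreover have "(2 * P x + - 2 * q x * P x) * exp (C * x) + (exp (C * x) * C) * (U x + V x)
        = ((1 - q x) * (2 * P x) + C * (U x + V x)) * exp (C * x)" by (simp add: algebra_simps)
    moreover have "(1 - q x) * (2 * P x) + C * (U x + V x) \<ge> 0"
    proof -
      have "\<bar>(1 - q x) * (2 * P x)\<bar> \<le> C * (U x + V x)"
        unfolding abs_mult
        by (rule mult_mono) (use Qb[of x] P_le[of x] U_nn[of x] V_nn[of x] in \<open>auto simp: C_def\<close>)
      then show ?thesis by linarith
    qed
    ultimately show "\<exists>y. (g has_real_derivative y) (at x) \<and> y \<ge> 0" by auto
  qed
  have uz: "U y + V y = 0" if "y \<le> X" for y
  proof -
    have "g y \<le> 0" using gmono[OF that] by (simp add: g_def UX VX)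
    then have "U y + V y \<le> 0" by (simp add: g_def mult_le_0_iff)
    then show ?thesis using U_nn[of y] V_nn[of y] by linarith
  qed
  have "2 * km \<le> 0"
  proof (rule tendsto_upperbound[OF bot_facts(3)])
    show "eventually (\<lambda>x. 0 \<ge> cmod (u' x + \<i> * of_real km * u x)) at_bot"
      unfolding eventually_at_bot_linorder
    proof (intro exI allI impI)
      fix y assume "y \<le> X"
      then have "U y = 0" "V y = 0" using uz U_nn V_nn by (metis add_nonneg_eq_0_iff)+
      then show "0 \<ge> cmod (u' y + \<i> * of_real km * u y)" by (simp add: U_def V_def)
    qed
  qed simp
  then show False using km_pos by simp
qed

lemma J_pos: "J > 0"
  using top_facts(1) tau_nz kp_pos by simp

lemma r_lt: "cmod r < 1"
proof -
  have "km * (1 - (cmod r)\<^sup>2) > 0" using J_pos bot_facts(1) by simp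
  then have "(cmod r)\<^sup>2 < 1" using km_pos by (simp add: zero_less_mult_iff)
  then show ?thesis by (simp add: power_less_one_iff abs_square_less_1)
qed

end


context sc begin

definition "g x = sqrt (max (q x) (\<Delta>\<^sup>2))"
definition "s x = sqrt (max 0 (\<Delta>\<^sup>2 - q x))"
definition "\<phi> x = g x + s x"

lemma g_ge: "g x \<ge> \<Delta>"
  unfolding g_def using Delta_pos by (metis abs_of_pos max.cobounded2 real_sqrt_abs real_sqrt_le_iff)
lemma g_pos: "g x > 0" using g_ge[of x] Delta_pos by linarith
lemma s_nn: "s x \<ge> 0" unfolding s_def by simp
lemma phi_pos: "\<phi> x > 0" unfolding \<phi>_def using g_pos[of x] s_nn[of x] by linarith
lemma phi_ge: "\<phi> x \<ge> \<Delta>" unfolding \<phi>_def using g_ge[of x] s_nn[of x] by linarith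

lemma gs_cases:
  "(q x \<ge> \<Delta>\<^sup>2 \<and> g x = sqrt (q x) \<and> s x = 0) \<or> (q x < \<Delta>\<^sup>2 \<and> g x = \<Delta> \<and> s x = sqrt (\<Delta>\<^sup>2 - q x))"
  using Delta_pos by (cases "q x \<ge> \<Delta>\<^sup>2") (auto simp: g_def s_def max_def)

lemma phi_sq: "(\<phi> x)\<^sup>2 - q x = 2 * s x * \<phi> x"
proof (cases "q x \<ge> \<Delta>\<^sup>2")
  case True
  then have "g x = sqrt (q x)" "s x = 0" using gs_cases[of x] by auto
  moreover have "q x \<ge> 0" using True by (meson order.trans zero_le_power2)
  ultimately show ?thesis by (simp add: \<phi>_def)
next
  case False
  then have "g x = \<Delta>" "s x = sqrt (\<Delta>\<^sup>2 - q x)" using gs_cases[of x] by auto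
  moreover have "(sqrt (\<Delta>\<^sup>2 - q x))\<^sup>2 = \<Delta>\<^sup>2 - q x" using False by simp
  ultimately show ?thesis by (simp add: \<phi>_def power2_eq_square algebra_simps)
qed

lemma g_cont: "isCont g x" and s_cont: "isCont s x" and phi_cont: "isCont \<phi> x"
  unfolding g_def s_def \<phi>_def by (intro continuous_intros q_isCont)+

definition "B = {t. q t = \<Delta>\<^sup>2 \<and> \<not> (eventually (\<lambda>y. q y = \<Delta>\<^sup>2) (nhds t))}"

lemma flat_interval:
  assumes "a < b" "b < c" "\<And>y. a \<le> y \<Longrightarrow> y \<le> c \<Longrightarrow> q y = \<Delta>\<^sup>2"
  shows "eventually (\<lambda>y. q y = \<Delta>\<^sup>2) (nhds b)"
  unfolding eventually_nhds
  by (rule exI[of _ "{a<..<c}"]) (use assms in auto)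

lemma B_finite: "finite B"
proof -
  have "finite (B \<inter> {..x0})"
  proof (rule finite_no3)
    fix a b c assume abc: "a \<in> B \<inter> {..x0}" "b \<in> B \<inter> {..x0}" "c \<in> B \<inter> {..x0}" "a < b" "b < c"
    have "q y = \<Delta>\<^sup>2" if "a \<le> y" "y \<le> c" for y
      using noninc[of a y] noninc[of y c] abc that by (auto simp: B_def)
    then show False using flat_interval[of a b c] abc by (auto simp: B_def)
  qed
  moreover have "finite (B \<inter> {x0..})"
  proof (rule finite_no3)
    fix a b c assume abc: "a \<in> B \<inter> {x0..}" "b \<in> B \<inter> {x0..}" "c \<in> B \<inter> {x0..}" "a < b" "b < c"
    have "q y = \<Delta>\<^sup>2" if "a \<le> y" "y \<le> c" for y
      using nondec[of a y] nondec[of y c] abc that by (auto simp: B_def)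
    then show False using flat_interval[of a b c] abc by (auto simp: B_def)
  qed
  ultimately have "finite (B \<inter> {..x0} \<union> B \<inter> {x0..})" by simp
  moreover have "B = B \<inter> {..x0} \<union> B \<inter> {x0..}" by auto
  ultimately show ?thesis by simp
qed

lemma gs_deriv:
  assumes qd: "(q has_real_derivative qd) (at t)" and tB: "t \<notin> B"
  shows "\<exists>gd sd. (g has_real_derivative gd) (at t) \<and> (s has_real_derivative sd) (at t) \<and>
    ((s t = 0 \<and> sd = 0 \<and> gd * (2 * g t) = qd) \<or> (g t = \<Delta> \<and> gd = 0 \<and> s t > 0 \<and> sd * (2 * s t) = - qd))"
proof -
  have D2: "\<Delta>\<^sup>2 > 0" using Delta_pos by simp
  consider "q t > \<Delta>\<^sup>2" | "q t < \<Delta>\<^sup>2" | "q t = \<Delta>\<^sup>2" by linarith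
  then show ?thesis
  proof cases
    case 1
    have ev: "eventually (\<lambda>y. q y > \<Delta>\<^sup>2) (nhds t)"
      using order_tendstoD(1)[OF q_isCont[of t, unfolded isCont_def tendsto_at_iff_tendsto_nhds] 1] .
    have qt: "q t > 0" using 1 D2 by linarith
    have "(g has_real_derivative qd / (2 * sqrt (q t))) (at t)"
    proof -
      have "((\<lambda>y. sqrt (q y)) has_real_derivative inverse (sqrt (q t)) / 2 * qd) (at t)"
        by (rule DERIV_real_sqrt[THEN DERIV_chain2, OF qt qd])
      moreover have "eventually (\<lambda>y. g y = sqrt (q y)) (nhds t)"
        using ev by eventually_elim (simp add: g_def max_def)
      ultimately show ?thesis
        using DERIV_cong_ev[of t t g "\<lambda>y. sqrt (q y)"] by (simp add: field_simps)
    qed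
    moreover have "(s has_real_derivative 0) (at t)"
    proof -
      have "eventually (\<lambda>y. s y = 0) (nhds t)"
        using ev by eventually_elim (simp add: s_def max_def)
      then show ?thesis using DERIV_cong_ev[of t t s "\<lambda>y. 0" 0 0] by simp
    qed
    moreover have "s t = 0" "g t = sqrt (q t)" using gs_cases[of t] 1 by auto
    ultimately show ?thesis using qt by (intro exI[of _ "qd / (2 * sqrt (q t))"] exI[of _ 0]) simp
  next
    case 2
    have ev: "eventually (\<lambda>y. q y < \<Delta>\<^sup>2) (nhds t)"
      using order_tendstoD(2)[OF q_isCont[of t, unfolded isCont_def tendsto_at_iff_tendsto_nhds] 2] .
    have qt: "\<Delta>\<^sup>2 - q t > 0" using 2 by linarith
    have "(s has_real_derivative inverse (sqrt (\<Delta>\<^sup>2 - q t)) / 2 * (- qd)) (at t)"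
    proof -
      have "((\<lambda>y. \<Delta>\<^sup>2 - q y) has_real_derivative - qd) (at t)"
        using DERIV_diff[OF DERIV_const qd] by simp
      from DERIV_real_sqrt[THEN DERIV_chain2, OF qt this]
      have "((\<lambda>y. sqrt (\<Delta>\<^sup>2 - q y)) has_real_derivative inverse (sqrt (\<Delta>\<^sup>2 - q t)) / 2 * (- qd)) (at t)" .
      moreover have "eventually (\<lambda>y. s y = sqrt (\<Delta>\<^sup>2 - q y)) (nhds t)"
        using ev by eventually_elim (simp add: s_def max_def)
      ultimately show ?thesis using DERIV_cong_ev[of t t s "\<lambda>y. sqrt (\<Delta>\<^sup>2 - q y)"] by simp
    qed
    moreover have "(g has_real_derivative 0) (at t)"
    proof -
      have "eventually (\<lambda>y. g y = \<Delta>) (nhds t)"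
        using ev by eventually_elim (use Delta_pos in \<open>simp add: g_def max_def\<close>)
      then show ?thesis using DERIV_cong_ev[of t t g "\<lambda>y. \<Delta>" 0 0] by simp
    qed
    moreover have "s t = sqrt (\<Delta>\<^sup>2 - q t)" "g t = \<Delta>" using gs_cases[of t] 2 by auto
    moreover have "sqrt (\<Delta>\<^sup>2 - q t) > 0" using qt by simp
    ultimately show ?thesis
      by (intro exI[of _ 0] exI[of _ "inverse (sqrt (\<Delta>\<^sup>2 - q t)) / 2 * (- qd)"]) (simp add: field_simps)
  next
    case 3
    then have ev: "eventually (\<lambda>y. q y = \<Delta>\<^sup>2) (nhds t)" using tB by (auto simp: B_def)
    have "(q has_real_derivative 0) (at t)"
      using DERIV_cong_ev[of t t q "\<lambda>y. \<Delta>\<^sup>2" 0 0] ev by simp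
    then have q0: "qd = 0" using DERIV_unique qd by blast
    have "eventually (\<lambda>y. g y = \<Delta>) (nhds t)"
      using ev by eventually_elim (use Delta_pos in \<open>simp add: g_def max_def\<close>)
    then have "(g has_real_derivative 0) (at t)" using DERIV_cong_ev[of t t g "\<lambda>y. \<Delta>" 0 0] by simp
    moreover have "eventually (\<lambda>y. s y = 0) (nhds t)"
      using ev by eventually_elim (simp add: s_def max_def)
    then have "(s has_real_derivative 0) (at t)" using DERIV_cong_ev[of t t s "\<lambda>y. 0" 0 0] by simp
    moreover have "s t = 0" using 3 by (simp add: s_def)
    ultimately show ?thesis using q0 by (intro exI[of _ 0] exI[of _ 0]) simp
  qed
qed

end


lemma inv_cancel_aux: "a > 0 \<Longrightarrow> s > 0 \<Longrightarrow> inverse a * (e * a / s) = e / (s::real)"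
  by (simp add: field_simps)

lemma key_ineq:
  fixes a b c d f J E \<epsilon> :: real
  assumes f: "f > 0" and J: "J > 0" and e: "\<epsilon> > 0" and E: "E \<ge> 1"
    and ab: "a\<^sup>2 + b\<^sup>2 = (2 * f * J)\<^sup>2 * (E\<^sup>2 - 1)"
  shows "(c * a + d * b) / (2 * f\<^sup>2 * J) / sqrt (E\<^sup>2 - 1 + \<epsilon>) \<ge> - ((\<bar>c\<bar> + \<bar>d\<bar>) / f)"
proof -
  define Sq where "Sq = sqrt (E\<^sup>2 - 1 + \<epsilon>)"
  have E2: "E\<^sup>2 - 1 \<ge> 0" using E by (simp add: one_le_power)
  have Sq: "Sq > 0" unfolding Sq_def using E2 e by simp
  have sE: "sqrt (E\<^sup>2 - 1) \<le> Sq" unfolding Sq_def using e by simp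
  have r: "sqrt (a\<^sup>2 + b\<^sup>2) = 2 * f * J * sqrt (E\<^sup>2 - 1)"
    unfolding ab real_sqrt_mult using f J by simp
  have ha: "\<bar>a\<bar> \<le> sqrt (a\<^sup>2 + b\<^sup>2)" and hb: "\<bar>b\<bar> \<le> sqrt (a\<^sup>2 + b\<^sup>2)"
    using real_sqrt_le_mono[of "a\<^sup>2" "a\<^sup>2 + b\<^sup>2"] real_sqrt_le_mono[of "b\<^sup>2" "a\<^sup>2 + b\<^sup>2"] by auto
  have fJ: "2 * f * J > 0" using f J by simp
  have "\<bar>c * a + d * b\<bar> \<le> \<bar>c\<bar> * \<bar>a\<bar> + \<bar>d\<bar> * \<bar>b\<bar>"
    by (metis abs_mult abs_triangle_ineq)
  also have "\<dots> \<le> \<bar>c\<bar> * sqrt (a\<^sup>2 + b\<^sup>2) + \<bar>d\<bar> * sqrt (a\<^sup>2 + b\<^sup>2)"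
    by (intro add_mono mult_left_mono ha hb) auto
  also have "\<dots> = (\<bar>c\<bar> + \<bar>d\<bar>) * (2 * f * J) * sqrt (E\<^sup>2 - 1)"
    unfolding r by (simp add: algebra_simps)
  also have "\<dots> \<le> (\<bar>c\<bar> + \<bar>d\<bar>) * (2 * f * J) * Sq"
    using sE fJ by (intro mult_left_mono) auto
  finally have bnd: "- ((\<bar>c\<bar> + \<bar>d\<bar>) * (2 * f * J) * Sq) \<le> c * a + d * b" by linarith
  have den: "2 * f\<^sup>2 * J * Sq > 0" using f J Sq by simp
  have "- ((\<bar>c\<bar> + \<bar>d\<bar>) / f) * (2 * f\<^sup>2 * J * Sq) = - ((\<bar>c\<bar> + \<bar>d\<bar>) * (2 * f * J) * Sq)"
    using f by (simp add: power2_eq_square field_simps)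
  then have "- ((\<bar>c\<bar> + \<bar>d\<bar>) / f) \<le> (c * a + d * b) / (2 * f\<^sup>2 * J * Sq)"
    using bnd den by (simp add: pos_le_divide_eq)
  then show ?thesis unfolding Sq_def[symmetric] by (simp add: divide_divide_eq_left)
qed

context sc begin

definition "E x = (V x + (\<phi> x)\<^sup>2 * U x) / (2 * \<phi> x * J)"
definition "H \<epsilon> x = ln (E x + sqrt ((E x)\<^sup>2 - 1 + \<epsilon>))"

lemma ab_id: "(2 * \<phi> x * P x)\<^sup>2 + ((\<phi> x)\<^sup>2 * U x - V x)\<^sup>2 = (V x + (\<phi> x)\<^sup>2 * U x)\<^sup>2 - (2 * \<phi> x * J)\<^sup>2"
proof -
  have J2: "J\<^sup>2 = U x * V x - (P x)\<^sup>2" using PJ[of x] by simp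
  have "(2 * \<phi> x * J)\<^sup>2 = 4 * (\<phi> x)\<^sup>2 * (U x * V x - (P x)\<^sup>2)"
    by (simp add: power_mult_distrib J2)
  then show ?thesis by (simp add: power2_eq_square algebra_simps)
qed

lemma E_ge1: "E x \<ge> 1"
proof -
  have D: "2 * \<phi> x * J > 0" using phi_pos[of x] J_pos by simp
  have N: "V x + (\<phi> x)\<^sup>2 * U x \<ge> 0" using U_nn[of x] V_nn[of x] by simp
  have "(2 * \<phi> x * J)\<^sup>2 \<le> (V x + (\<phi> x)\<^sup>2 * U x)\<^sup>2" using ab_id[of x]
    using zero_le_power2[of "2 * \<phi> x * P x"] zero_le_power2[of "(\<phi> x)\<^sup>2 * U x - V x"] by linarith
  then have "2 * \<phi> x * J \<le> V x + (\<phi> x)\<^sup>2 * U x" using N by (rule power2_le_imp_le)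
  then show ?thesis unfolding E_def using D by simp
qed

lemma ab_E: "(2 * \<phi> x * P x)\<^sup>2 + ((\<phi> x)\<^sup>2 * U x - V x)\<^sup>2 = (2 * \<phi> x * J)\<^sup>2 * ((E x)\<^sup>2 - 1)"
proof -
  have D: "2 * \<phi> x * J > 0" using phi_pos[of x] J_pos by simp
  have "V x + (\<phi> x)\<^sup>2 * U x = (2 * \<phi> x * J) * E x" unfolding E_def using phi_pos[of x] J_pos by simp
  then show ?thesis unfolding ab_id by (simp add: power_mult_distrib algebra_simps)
qed

lemma E_deriv:
  assumes d: "(\<phi> has_real_derivative \<phi>d) (at t)"
  shows "(E has_real_derivative
     (((\<phi> t)\<^sup>2 - q t) * (2 * \<phi> t * P t) + \<phi>d * ((\<phi> t)\<^sup>2 * U t - V t)) / (2 * (\<phi> t)\<^sup>2 * J)) (at t)"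
proof -
  have p: "\<phi> t > 0" using phi_pos .
  have Jp: "J > 0" using J_pos .
  have N: "((\<lambda>x. V x + (\<phi> x)\<^sup>2 * U x) has_real_derivative
       - 2 * q t * P t + ((\<phi> t)\<^sup>2 * (2 * P t) + (2 * \<phi> t * \<phi>d) * U t)) (at t)"
    by (intro DERIV_add V_deriv DERIV_mult' U_deriv)
       (use DERIV_power[OF d, of 2] in \<open>simp add: power2_eq_square ac_simps\<close>)
  have Dd: "((\<lambda>x. 2 * \<phi> x * J) has_real_derivative 2 * \<phi>d * J) (at t)"
    using DERIV_cmult[OF DERIV_cmult[OF d, of 2], of J] by (simp add: mult.commute mult.left_commute)
  have "(E has_real_derivative
     ((- 2 * q t * P t + ((\<phi> t)\<^sup>2 * (2 * P t) + (2 * \<phi> t * \<phi>d) * U t)) * (2 * \<phi> t * J)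
       - (V t + (\<phi> t)\<^sup>2 * U t) * (2 * \<phi>d * J)) / ((2 * \<phi> t * J) * (2 * \<phi> t * J))) (at t)"
    unfolding E_def[abs_def] by (rule DERIV_divide[OF N Dd]) (use p Jp in simp)
  moreover have "((- 2 * q t * P t + ((\<phi> t)\<^sup>2 * (2 * P t) + (2 * \<phi> t * \<phi>d) * U t)) * (2 * \<phi> t * J)
       - (V t + (\<phi> t)\<^sup>2 * U t) * (2 * \<phi>d * J)) / ((2 * \<phi> t * J) * (2 * \<phi> t * J))
     = (((\<phi> t)\<^sup>2 - q t) * (2 * \<phi> t * P t) + \<phi>d * ((\<phi> t)\<^sup>2 * U t - V t)) / (2 * (\<phi> t)\<^sup>2 * J)"
    using p Jp by (simp add: field_simps power2_eq_square)
  ultimately show ?thesis by simp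
qed

lemma H_deriv:
  assumes d: "(E has_real_derivative Ed) (at t)" and e: "\<epsilon> > 0"
  shows "(H \<epsilon> has_real_derivative Ed / sqrt ((E t)\<^sup>2 - 1 + \<epsilon>)) (at t)"
proof -
  define Sq where "Sq = sqrt ((E t)\<^sup>2 - 1 + \<epsilon>)"
  have E1: "(E t)\<^sup>2 - 1 \<ge> 0" using E_ge1[of t] by (simp add: one_le_power)
  have pos: "(E t)\<^sup>2 - 1 + \<epsilon> > 0" using E1 e by simp
  have Sq: "Sq > 0" unfolding Sq_def using pos by simp
  have Et: "E t > 0" using E_ge1[of t] by simp
  have w: "((\<lambda>x. (E x)\<^sup>2 - 1 + \<epsilon>) has_real_derivative 2 * E t * Ed) (at t)"
    using DERIV_add[OF DERIV_diff[OF DERIV_power[OF d, of 2] DERIV_const[of 1]] DERIV_const[of \<epsilon>]]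
    by (simp add: ac_simps)
  have sq: "((\<lambda>x. sqrt ((E x)\<^sup>2 - 1 + \<epsilon>)) has_real_derivative inverse Sq / 2 * (2 * E t * Ed)) (at t)"
    unfolding Sq_def by (rule DERIV_real_sqrt[THEN DERIV_chain2, OF pos w])
  have in1: "((\<lambda>x. E x + sqrt ((E x)\<^sup>2 - 1 + \<epsilon>)) has_real_derivative Ed + inverse Sq / 2 * (2 * E t * Ed)) (at t)"
    by (rule DERIV_add[OF d sq])
  have wp: "E t + Sq > 0" using Et Sq by simp
  have "(H \<epsilon> has_real_derivative inverse (E t + Sq) * (Ed + inverse Sq / 2 * (2 * E t * Ed))) (at t)"
    unfolding H_def[abs_def] using DERIV_chain2[OF DERIV_ln[OF wp[unfolded Sq_def]] in1] by (simp add: Sq_def)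
  moreover have eq1: "Ed + inverse Sq / 2 * (2 * E t * Ed) = Ed * (E t + Sq) / Sq"
    using Sq by (simp add: field_simps)
  have eq2: "inverse (E t + Sq) * (Ed * (E t + Sq) / Sq) = Ed / Sq"
    by (rule inv_cancel_aux[OF wp Sq])
  have "inverse (E t + Sq) * (Ed + inverse Sq / 2 * (2 * E t * Ed)) = Ed / Sq"
    by (subst eq1) (rule eq2)
  ultimately show ?thesis by (simp add: Sq_def)
qed

lemma H_bound:
  assumes d: "(\<phi> has_real_derivative \<phi>d) (at t)" and e: "\<epsilon> > 0"
  shows "\<exists>Hd. (H \<epsilon> has_real_derivative Hd) (at t) \<and> Hd \<ge> - (2 * s t + \<bar>\<phi>d\<bar> / \<phi> t)"
proof (intro exI conjI)
  show "(H \<epsilon> has_real_derivative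
    (((\<phi> t)\<^sup>2 - q t) * (2 * \<phi> t * P t) + \<phi>d * ((\<phi> t)\<^sup>2 * U t - V t)) / (2 * (\<phi> t)\<^sup>2 * J) / sqrt ((E t)\<^sup>2 - 1 + \<epsilon>)) (at t)"
    by (rule H_deriv[OF E_deriv[OF d] e])
  have "(((\<phi> t)\<^sup>2 - q t) * (2 * \<phi> t * P t) + \<phi>d * ((\<phi> t)\<^sup>2 * U t - V t)) / (2 * (\<phi> t)\<^sup>2 * J) / sqrt ((E t)\<^sup>2 - 1 + \<epsilon>)
      \<ge> - ((\<bar>(\<phi> t)\<^sup>2 - q t\<bar> + \<bar>\<phi>d\<bar>) / \<phi> t)"
    by (rule key_ineq[OF phi_pos J_pos e E_ge1 ab_E])
  moreover have "\<bar>(\<phi> t)\<^sup>2 - q t\<bar> = 2 * s t * \<phi> t"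
    using phi_sq[of t] s_nn[of t] phi_pos[of t] by simp
  moreover have "(2 * s t * \<phi> t + \<bar>\<phi>d\<bar>) / \<phi> t = 2 * s t + \<bar>\<phi>d\<bar> / \<phi> t"
    using phi_pos[of t] by (simp add: field_simps)
  ultimately show "(((\<phi> t)\<^sup>2 - q t) * (2 * \<phi> t * P t) + \<phi>d * ((\<phi> t)\<^sup>2 * U t - V t)) / (2 * (\<phi> t)\<^sup>2 * J) / sqrt ((E t)\<^sup>2 - 1 + \<epsilon>)
      \<ge> - (2 * s t + \<bar>\<phi>d\<bar> / \<phi> t)" by simp
qed

end


lemma mono_fin_ex:
  fixes f :: "real \<Rightarrow> real"
  assumes "a \<le> b" "finite S" "continuous_on {a..b} f"
    and d: "\<And>x. x \<in> {a<..<b} \<Longrightarrow> x \<notin> S \<Longrightarrow> \<exists>D. (f has_real_derivative D) (at x) \<and> D \<ge> 0"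
  shows "f a \<le> f b"
proof (rule mono_fin[OF assms(1-3), of "\<lambda>x. SOME D. (f has_real_derivative D) (at x) \<and> D \<ge> 0"])
  fix x assume "x \<in> {a<..<b}" "x \<notin> S"
  from someI_ex[OF d[OF this]]
  show "(f has_real_derivative (SOME D. (f has_real_derivative D) (at x) \<and> D \<ge> 0)) (at x) \<and>
        (SOME D. (f has_real_derivative D) (at x) \<and> D \<ge> 0) \<ge> 0" .
qed

context sc begin

lemma s_cont_on: "continuous_on A s"
  by (intro continuous_at_imp_continuous_on ballI s_cont)

lemma E_cont: "isCont E x"
  unfolding E_def using phi_pos[of x] J_pos
  by (intro continuous_intros U_cont V_cont phi_cont) auto

lemma H_cont: assumes "\<epsilon> > 0" shows "isCont (H \<epsilon>) x"
proof -
  have E1: "(E x)\<^sup>2 - 1 \<ge> 0" using E_ge1[of x] by (simp add: one_le_power)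
  have "E x + sqrt ((E x)\<^sup>2 - 1 + \<epsilon>) > 0" using E_ge1[of x] E1 assms by (simp add: add_pos_nonneg)
  then show ?thesis unfolding H_def[abs_def]
    by (intro continuous_intros E_cont) auto
qed

lemma mono_gen:
  assumes yz: "y \<le> z" and e: "\<epsilon> > 0" and sg: "\<sigma> = 1 \<or> \<sigma> = -1"
    and sign: "\<And>t D. y < t \<Longrightarrow> t < z \<Longrightarrow> (q has_real_derivative D) (at t) \<Longrightarrow> \<sigma> * D \<ge> 0"
  shows "H \<epsilon> y + \<sigma> * (ln (g y) - ln (\<Delta> + s y))
      \<le> H \<epsilon> z + \<sigma> * (ln (g z) - ln (\<Delta> + s z)) + 2 * integral {y..z} s"
proof -
  obtain S0 qd where S0: "finite S0" "\<And>x. x \<notin> S0 \<Longrightarrow> (q has_real_derivative qd x) (at x)"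
    using q_pc by blast
  define \<Psi> where "\<Psi> t = H \<epsilon> t + \<sigma> * (ln (g t) - ln (\<Delta> + s t)) + 2 * integral {y..t} s" for t
  have Dp: "\<Delta> + s t > 0" for t using Delta_pos s_nn[of t] by linarith
  have "\<Psi> y \<le> \<Psi> z"
  proof (rule mono_fin_ex[OF yz, of "S0 \<union> B"])
    show "finite (S0 \<union> B)" using S0(1) B_finite by simp
    have c1: "continuous_on {y..z} (\<lambda>t. H \<epsilon> t + \<sigma> * (ln (g t) - ln (\<Delta> + s t)))"
      using g_pos Dp
      by (intro continuous_at_imp_continuous_on ballI continuous_intros H_cont[OF e] g_cont s_cont)
         (auto simp: less_imp_neq[symmetric])
    have "s integrable_on {y..z}" by (intro integrable_continuous_real s_cont_on)
    then have c2: "continuous_on {y..z} (\<lambda>t. integral {y..t} s)"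
      by (rule indefinite_integral_continuous_1)
    show "continuous_on {y..z} \<Psi>" unfolding \<Psi>_def
      by (intro continuous_on_add continuous_on_mult c1 c2 continuous_on_const)
  next
    fix t assume t: "t \<in> {y<..<z}" "t \<notin> S0 \<union> B"
    have qd: "(q has_real_derivative qd t) (at t)" using S0(2) t by auto
    obtain gd sd where gd: "(g has_real_derivative gd) (at t)" and sd: "(s has_real_derivative sd) (at t)"
      and cs: "(s t = 0 \<and> sd = 0 \<and> gd * (2 * g t) = qd t) \<or> (g t = \<Delta> \<and> gd = 0 \<and> s t > 0 \<and> sd * (2 * s t) = - qd t)"
      using gs_deriv[OF qd] t by blast
    have pd: "(\<phi> has_real_derivative gd + sd) (at t)"
      unfolding \<phi>_def[abs_def] by (rule DERIV_add[OF gd sd])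
    obtain Hd where Hd: "(H \<epsilon> has_real_derivative Hd) (at t)" "Hd \<ge> - (2 * s t + \<bar>gd + sd\<bar> / \<phi> t)"
      using H_bound[OF pd e] by blast
    have lg: "((\<lambda>t. ln (g t)) has_real_derivative inverse (g t) * gd) (at t)"
      by (rule DERIV_chain2[OF DERIV_ln[OF g_pos] gd])
    have ls: "((\<lambda>t. ln (\<Delta> + s t)) has_real_derivative inverse (\<Delta> + s t) * sd) (at t)"
      using DERIV_chain2[OF DERIV_ln[OF Dp] DERIV_add[OF DERIV_const[of \<Delta>] sd]] by simp
    have id: "((\<lambda>t. integral {y..t} s) has_real_derivative s t) (at t)"
      using integral_has_real_derivative[OF s_cont_on, of t y z] t at_within_Icc_at[of y t z] by auto
    define Pd where "Pd = Hd + \<sigma> * (inverse (g t) * gd - inverse (\<Delta> + s t) * sd) + 2 * s t"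
    have "(\<Psi> has_real_derivative Pd) (at t)"
      unfolding \<Psi>_def[abs_def] Pd_def
      by (intro DERIV_add DERIV_cmult DERIV_diff Hd(1) lg ls id)
    moreover have "\<sigma> * D \<ge> 0" if "(q has_real_derivative D) (at t)" for D
      using sign[OF _ _ that] t by auto
    then have sq: "\<sigma> * qd t \<ge> 0" using qd by blast
    have "\<sigma> * (inverse (g t) * gd - inverse (\<Delta> + s t) * sd) \<ge> \<bar>gd + sd\<bar> / \<phi> t"
      using cs
    proof
      assume A: "s t = 0 \<and> sd = 0 \<and> gd * (2 * g t) = qd t"
      then have "\<sigma> * gd * (2 * g t) \<ge> 0" using sq by (simp add: mult.assoc)
      then have "\<sigma> * gd \<ge> 0" using g_pos[of t] by (simp add: zero_le_mult_iff)
      then have "\<sigma> * gd = \<bar>gd\<bar>" using sg by auto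
      moreover have "\<phi> t = g t" using A by (simp add: \<phi>_def)
      moreover have "\<sigma> * (inverse (g t) * gd - inverse (\<Delta> + s t) * sd) = (\<sigma> * gd) / g t"
        using A by (simp add: divide_inverse algebra_simps)
      ultimately show ?thesis using A by simp
    next
      assume B: "g t = \<Delta> \<and> gd = 0 \<and> s t > 0 \<and> sd * (2 * s t) = - qd t"
      then have "- \<sigma> * sd * (2 * s t) \<ge> 0" using sq by (simp add: mult.assoc)
      moreover have "- \<sigma> * sd = (- \<sigma> * sd * (2 * s t)) / (2 * s t)" using B by simp
      ultimately have "- \<sigma> * sd \<ge> 0" using B by (metis divide_nonneg_pos mult_pos_pos zero_less_numeral)
      then have "- \<sigma> * sd = \<bar>sd\<bar>" using sg by auto
      moreover have "\<phi> t = \<Delta> + s t" using B by (simp add: \<phi>_def)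
      moreover have "\<sigma> * (inverse (g t) * gd - inverse (\<Delta> + s t) * sd) = (- \<sigma> * sd) / (\<Delta> + s t)"
        using B by (simp add: divide_inverse algebra_simps)
      ultimately show ?thesis using B by simp
    qed
    then have "Pd \<ge> 0" unfolding Pd_def using Hd(2) by linarith
    ultimately show "\<exists>D. (\<Psi> has_real_derivative D) (at t) \<and> D \<ge> 0" by blast
  qed
  then show ?thesis unfolding \<Psi>_def by simp
qed

lemma mono_left:
  assumes "y \<le> z" "z \<le> x0" "\<epsilon> > 0"
  shows "H \<epsilon> y \<le> H \<epsilon> z + (ln (g y) - ln (g z)) + (ln (\<Delta> + s z) - ln (\<Delta> + s y)) + 2 * integral {y..z} s"
  using mono_gen[OF assms(1) assms(3), of "-1"] qd_left assms by fastforce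

lemma mono_right:
  assumes "x0 \<le> y" "y \<le> z" "\<epsilon> > 0"
  shows "H \<epsilon> y \<le> H \<epsilon> z + (ln (g z) - ln (g y)) + (ln (\<Delta> + s y) - ln (\<Delta> + s z)) + 2 * integral {y..z} s"
  using mono_gen[OF assms(2) assms(3), of 1] qd_right assms by fastforce

end


context sc begin

definition "m = s x0"

lemma s_le_m: "s x \<le> m"
  unfolding m_def s_def using q_min[of x] by (intro real_sqrt_le_mono) auto

lemma g_le_km: "x \<le> x0 \<Longrightarrow> g x \<le> km"
  unfolding g_def using q_le_km[of x] Delta_hi km_pos
  by (metis max.bounded_iff min.bounded_iff real_sqrt_abs real_sqrt_le_mono abs_of_pos)

lemma g_le_kp: "x0 \<le> x \<Longrightarrow> g x \<le> kp"
  unfolding g_def using q_le_kp[of x] Delta_hi kp_pos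
  by (metis max.bounded_iff min.bounded_iff real_sqrt_abs real_sqrt_le_mono abs_of_pos)

lemma phi_lim:
  assumes F: "F = at_top \<or> F = at_bot" and k: "k > 0" and ql: "(q \<longlongrightarrow> k\<^sup>2) F" and kD: "\<Delta>\<^sup>2 \<le> k\<^sup>2"
  shows "(\<phi> \<longlongrightarrow> k) F"
proof -
  have "((\<lambda>x. sqrt (max (q x) (\<Delta>\<^sup>2)) + sqrt (max 0 (\<Delta>\<^sup>2 - q x))) \<longlongrightarrow>
     sqrt (max (k\<^sup>2) (\<Delta>\<^sup>2)) + sqrt (max 0 (\<Delta>\<^sup>2 - k\<^sup>2))) F"
    by (intro tendsto_intros ql)
  moreover have "sqrt (max (k\<^sup>2) (\<Delta>\<^sup>2)) + sqrt (max 0 (\<Delta>\<^sup>2 - k\<^sup>2)) = k"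
    using kD k by (simp add: max_def)
  ultimately show ?thesis unfolding \<phi>_def g_def s_def by simp
qed

lemma E_lim:
  assumes F: "F = at_top \<or> F = at_bot" and k: "k > 0" and ql: "(q \<longlongrightarrow> k\<^sup>2) F" and kD: "\<Delta>\<^sup>2 \<le> k\<^sup>2"
    and Nl: "((\<lambda>x. V x + k\<^sup>2 * U x) \<longlongrightarrow> L) F"
  shows "(E \<longlongrightarrow> L / (2 * k * J)) F"
proof -
  have pl: "(\<phi> \<longlongrightarrow> k) F" by (rule phi_lim[OF F k ql kD])
  have k2: "k\<^sup>2 > 0" using k by simp
  have evU: "eventually (\<lambda>x. U x \<le> (L + 1) / k\<^sup>2) F"
  proof -
    have "eventually (\<lambda>x. V x + k\<^sup>2 * U x < L + 1) F" using order_tendstoD(2)[OF Nl, of "L+1"] by simp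
    then show ?thesis
    proof (rule eventually_mono)
      fix x assume "V x + k\<^sup>2 * U x < L + 1"
      then have "U x * k\<^sup>2 \<le> L + 1" using V_nn[of x] by (simp add: mult.commute)
      then show "U x \<le> (L + 1) / k\<^sup>2" using k2 by (simp add: pos_le_divide_eq)
    qed
  qed
  have p2: "((\<lambda>x. (\<phi> x)\<^sup>2 - k\<^sup>2) \<longlongrightarrow> 0) F"
    using tendsto_diff[OF tendsto_power[OF pl, of 2] tendsto_const[of "k\<^sup>2"]] by simp
  define M where "M = (L + 1) / k\<^sup>2"
  have r: "((\<lambda>x. ((\<phi> x)\<^sup>2 - k\<^sup>2) * U x) \<longlongrightarrow> 0) F"
  proof (rule Lim_null_comparison)
    show "eventually (\<lambda>x. norm (((\<phi> x)\<^sup>2 - k\<^sup>2) * U x) \<le> \<bar>(\<phi> x)\<^sup>2 - k\<^sup>2\<bar> * M) F"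
      using evU unfolding M_def[symmetric] apply eventually_elim
      using U_nn by (simp only: real_norm_def abs_mult) (rule mult_left_mono, auto)
    show "((\<lambda>x. \<bar>(\<phi> x)\<^sup>2 - k\<^sup>2\<bar> * M) \<longlongrightarrow> 0) F"
      using tendsto_mult_left_zero[OF tendsto_rabs_zero[OF p2]] .
  qed
  have "((\<lambda>x. (V x + k\<^sup>2 * U x) + ((\<phi> x)\<^sup>2 - k\<^sup>2) * U x) \<longlongrightarrow> L + 0) F"
    by (rule tendsto_add[OF Nl r])
  then have N: "((\<lambda>x. V x + (\<phi> x)\<^sup>2 * U x) \<longlongrightarrow> L) F" by (simp add: algebra_simps)
  have "((\<lambda>x. (V x + (\<phi> x)\<^sup>2 * U x) / (2 * \<phi> x * J)) \<longlongrightarrow> L / (2 * k * J)) F"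
    by (intro tendsto_intros N pl) (use k J_pos in simp)
  then show ?thesis unfolding E_def[abs_def] .
qed

lemma E_top: "(E \<longlongrightarrow> 1) at_top"
proof -
  have "\<Delta>\<^sup>2 \<le> kp\<^sup>2" using Delta_hi by simp
  from E_lim[of at_top kp, OF _ kp_pos lim_top this top_facts(2)]
  have "(E \<longlongrightarrow> 2 * kp\<^sup>2 * (cmod \<tau>)\<^sup>2 / (2 * kp * J)) at_top" by simp
  moreover have "2 * kp\<^sup>2 * (cmod \<tau>)\<^sup>2 / (2 * kp * J) = 1"
    using top_facts(1) J_pos kp_pos tau_nz by (simp add: power2_eq_square)
  ultimately show ?thesis by simp
qed

definition "\<rho> = cmod r"

lemma E_bot: "(E \<longlongrightarrow> (1 + \<rho>\<^sup>2) / (1 - \<rho>\<^sup>2)) at_bot"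
proof -
  have "\<Delta>\<^sup>2 \<le> km\<^sup>2" using Delta_hi by simp
  from E_lim[of at_bot km, OF _ km_pos lim_bot this bot_facts(2)]
  have "(E \<longlongrightarrow> 2 * km\<^sup>2 * (1 + (cmod r)\<^sup>2) / (2 * km * J)) at_bot" by simp
  moreover have "2 * km\<^sup>2 * (1 + (cmod r)\<^sup>2) / (2 * km * J) = (1 + \<rho>\<^sup>2) / (1 - \<rho>\<^sup>2)"
    using bot_facts(1) km_pos unfolding \<rho>_def by (simp add: power2_eq_square)
  ultimately show ?thesis by simp
qed

lemma H_top: assumes "\<epsilon> > 0" shows "(H \<epsilon> \<longlongrightarrow> ln (1 + sqrt \<epsilon>)) at_top"
proof -
  have sq: "sqrt \<epsilon> \<ge> 0" using assms by simp
  then have sp: "1 + sqrt \<epsilon> > 0" by linarith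
  have "((\<lambda>x. ln (E x + sqrt ((E x)\<^sup>2 - 1 + \<epsilon>))) \<longlongrightarrow> ln (1 + sqrt (1\<^sup>2 - 1 + \<epsilon>))) at_top"
    by (intro tendsto_intros E_top) (use sp in auto)
  then show ?thesis unfolding H_def[abs_def] by simp
qed

end


context sc begin

lemma s_eq: "s = (\<lambda>x. if x \<in> {x. q x < \<Delta>\<^sup>2} then sqrt (\<Delta>\<^sup>2 - q x) else 0)"
  by (auto simp: s_def max_def fun_eq_iff)

lemma s_int:
  assumes hint: "(\<lambda>x. sqrt (\<Delta>\<^sup>2 - q x)) integrable_on {x. q x < \<Delta>\<^sup>2}"
  shows "s integrable_on UNIV"
    and "integral UNIV s = integral {x. q x < \<Delta>\<^sup>2} (\<lambda>x. sqrt (\<Delta>\<^sup>2 - q x))"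
  unfolding s_eq Henstock_Kurzweil_Integration.integrable_restrict_UNIV
        Henstock_Kurzweil_Integration.integral_restrict_UNIV by (rule hint) (rule refl)

lemma int_le:
  assumes "s integrable_on UNIV" "y \<le> z"
  shows "integral {y..z} s \<le> integral UNIV s"
  by (rule integral_subset_le) (use assms s_nn in \<open>auto intro: integrable_continuous_real s_cont_on\<close>)

definition "K = ln km + ln kp - 2 * ln \<Delta> + 2 * (ln (\<Delta> + m) - ln \<Delta>) + 2 * integral UNIV s"

lemma combined:
  assumes sint: "s integrable_on UNIV" and y: "y \<le> x0" and z: "x0 \<le> z" and e: "\<epsilon> > 0"
  shows "H \<epsilon> y \<le> H \<epsilon> z + K"
proof -
  have L: "H \<epsilon> y \<le> H \<epsilon> x0 + (ln (g y) - ln (g x0)) + (ln (\<Delta> + s x0) - ln (\<Delta> + s y)) + 2 * integral {y..x0} s"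
    by (rule mono_left[OF y order_refl e])
  have R: "H \<epsilon> x0 \<le> H \<epsilon> z + (ln (g z) - ln (g x0)) + (ln (\<Delta> + s x0) - ln (\<Delta> + s z)) + 2 * integral {x0..z} s"
    by (rule mono_right[OF order_refl z e])
  have ic: "integral {y..x0} s + integral {x0..z} s = integral {y..z} s"
    by (rule Henstock_Kurzweil_Integration.integral_combine[OF y z]) (intro integrable_continuous_real s_cont_on)
  have il: "integral {y..z} s \<le> integral UNIV s" using int_le[OF sint] y z by simp
  have Dp: "\<Delta> > 0" using Delta_pos .
  have b1: "ln (g y) \<le> ln km" using g_le_km[OF y] g_pos[of y] by simp
  have b2: "ln (g z) \<le> ln kp" using g_le_kp[OF z] g_pos[of z] by simp
  have b3: "ln \<Delta> \<le> ln (g x0)" using g_ge[of x0] Dp by simp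
  have b4: "ln \<Delta> \<le> ln (\<Delta> + s y)" using s_nn[of y] Dp by simp
  have b5: "ln \<Delta> \<le> ln (\<Delta> + s z)" using s_nn[of z] Dp by simp
  have b6: "ln (\<Delta> + s x0) = ln (\<Delta> + m)" by (simp add: m_def)
  show ?thesis using L R ic il b1 b2 b3 b4 b5 b6 unfolding K_def by (smt (verit))
qed

lemma H0_bound:
  assumes sint: "s integrable_on UNIV" and y: "y \<le> x0"
  shows "ln (E y + sqrt ((E y)\<^sup>2 - 1)) \<le> K"
proof -
  have E1: "(E y)\<^sup>2 - 1 \<ge> 0" using E_ge1[of y] by (simp add: one_le_power)
  have Ep: "E y > 0" using E_ge1[of y] by simp
  have main: "ln (E y + sqrt ((E y)\<^sup>2 - 1)) \<le> K + sqrt \<epsilon>" if e: "\<epsilon> > 0" for \<epsilon>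
  proof -
    have ev: "eventually (\<lambda>z. H \<epsilon> y - K \<le> H \<epsilon> z) at_top"
      unfolding eventually_at_top_linorder
    proof (intro exI[of _ x0] allI impI)
      fix z assume "z \<ge> x0"
      from combined[OF sint y this e] show "H \<epsilon> y - K \<le> H \<epsilon> z" by linarith
    qed
    have "H \<epsilon> y - K \<le> ln (1 + sqrt \<epsilon>)"
      by (rule tendsto_lowerbound[OF H_top[OF e] ev]) simp
    moreover have "ln (1 + sqrt \<epsilon>) \<le> sqrt \<epsilon>" using e by (intro ln_add_one_self_le_self) simp
    moreover have "ln (E y + sqrt ((E y)\<^sup>2 - 1)) \<le> H \<epsilon> y"
      unfolding H_def using Ep E1 e by (simp add: add_pos_nonneg)
    ultimately show ?thesis by linarith
  qed
  show ?thesis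
  proof (rule ccontr)
    assume "\<not> ?thesis"
    then have d: "ln (E y + sqrt ((E y)\<^sup>2 - 1)) - K > 0" by simp
    define \<delta> where "\<delta> = (ln (E y + sqrt ((E y)\<^sup>2 - 1)) - K) / 2"
    have dd: "2 * \<delta> = ln (E y + sqrt ((E y)\<^sup>2 - 1)) - K" by (simp add: \<delta>_def)
    have dp: "\<delta> > 0" using d by (simp add: \<delta>_def)
    have "\<delta>\<^sup>2 > 0" using dp by simp
    from main[OF this] have "ln (E y + sqrt ((E y)\<^sup>2 - 1)) \<le> K + \<delta>" using dp by simp
    then show False using dd dp by linarith
  qed
qed

lemma rho_nn: "\<rho> \<ge> 0" and rho_lt: "\<rho> < 1"
  using r_lt by (simp_all add: \<rho>_def)

lemma a1: "(d::real) \<noteq> 0 \<Longrightarrow> (a/d)^2 - 1 = (a^2 - d^2)/d^2"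
  by (simp add: power_divide diff_divide_distrib)
lemma a2: "(1 + (\<rho>::real)^2)^2 - (1 - \<rho>^2)^2 = (2*\<rho>)^2"
  by (simp add: power2_eq_square algebra_simps)
lemma a3: "0 \<le> (\<rho>::real) \<Longrightarrow> \<rho> < 1 \<Longrightarrow> (1 + \<rho>^2) / (1 - \<rho>^2) + 2 * \<rho> / (1 - \<rho>^2) = (1 + \<rho>) / (1 - \<rho>)"
proof -
  assume "0 \<le> \<rho>" "\<rho> < 1"
  then have "1 - \<rho>^2 = (1 - \<rho>) * (1 + \<rho>)" "1 + \<rho>^2 + 2 * \<rho> = (1 + \<rho>) * (1 + \<rho>)" "1 - \<rho> \<noteq> 0" "1 + \<rho> \<noteq> 0"
    by (auto simp: power2_eq_square algebra_simps)
  then show ?thesis by (simp add: add_divide_distrib[symmetric])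
qed

lemma Em_calc: "(1 + \<rho>\<^sup>2) / (1 - \<rho>\<^sup>2) + sqrt (((1 + \<rho>\<^sup>2) / (1 - \<rho>\<^sup>2))\<^sup>2 - 1) = (1 + \<rho>) / (1 - \<rho>)"
proof -
  have d: "1 - \<rho>\<^sup>2 > 0" using rho_lt rho_nn by (simp add: power_less_one_iff abs_square_less_1)
  have "((1 + \<rho>\<^sup>2) / (1 - \<rho>\<^sup>2))\<^sup>2 - 1 = ((1 + \<rho>\<^sup>2)\<^sup>2 - (1 - \<rho>\<^sup>2)\<^sup>2) / (1 - \<rho>\<^sup>2)\<^sup>2"
    by (rule a1) (use d in simp)
  also have "\<dots> = (2 * \<rho>)\<^sup>2 / (1 - \<rho>\<^sup>2)\<^sup>2" by (simp only: a2)
  also have "\<dots> = (2 * \<rho> / (1 - \<rho>\<^sup>2))\<^sup>2" by (simp only: power_divide)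
  finally have "((1 + \<rho>\<^sup>2) / (1 - \<rho>\<^sup>2))\<^sup>2 - 1 = (2 * \<rho> / (1 - \<rho>\<^sup>2))\<^sup>2" .
  then have "sqrt (((1 + \<rho>\<^sup>2) / (1 - \<rho>\<^sup>2))\<^sup>2 - 1) = 2 * \<rho> / (1 - \<rho>\<^sup>2)"
    using d rho_nn by simp
  moreover have "(1 + \<rho>\<^sup>2) / (1 - \<rho>\<^sup>2) + 2 * \<rho> / (1 - \<rho>\<^sup>2) = (1 + \<rho>) / (1 - \<rho>)"
    using rho_nn rho_lt by (rule a3)
  ultimately show ?thesis by simp
qed

lemma rho_bound:
  assumes sint: "s integrable_on UNIV"
  shows "ln ((1 + \<rho>) / (1 - \<rho>)) \<le> K"
proof -
  have d: "1 - \<rho>\<^sup>2 > 0" using rho_lt rho_nn by (simp add: power_less_one_iff abs_square_less_1)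
  have Em1: "(1 + \<rho>\<^sup>2) / (1 - \<rho>\<^sup>2) \<ge> 1" using d rho_nn by simp
  have "((\<lambda>y. ln (E y + sqrt ((E y)\<^sup>2 - 1))) \<longlongrightarrow>
      ln ((1 + \<rho>\<^sup>2) / (1 - \<rho>\<^sup>2) + sqrt (((1 + \<rho>\<^sup>2) / (1 - \<rho>\<^sup>2))\<^sup>2 - 1))) at_bot"
    by (intro tendsto_intros E_bot) (use Em_calc rho_nn rho_lt in auto)
  then have "ln ((1 + \<rho>\<^sup>2) / (1 - \<rho>\<^sup>2) + sqrt (((1 + \<rho>\<^sup>2) / (1 - \<rho>\<^sup>2))\<^sup>2 - 1)) \<le> K"
    by (rule tendsto_upperbound) (auto simp: eventually_at_bot_linorder intro!: exI[of _ x0] H0_bound[OF sint])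
  then show ?thesis unfolding Em_calc .
qed

end


lemma sech_sq_exp:
  fixes \<Theta> :: real
  shows "(sech \<Theta>)\<^sup>2 = 4 * exp (2 * \<Theta>) / (exp (2 * \<Theta>) + 1)\<^sup>2"
proof -
  define a where "a = exp \<Theta>"
  have a: "a > 0" by (simp add: a_def)
  have c: "cosh \<Theta> = (a\<^sup>2 + 1) / (2 * a)"
    unfolding cosh_def a_def using a[unfolded a_def]
    by (simp add: exp_minus field_simps power2_eq_square)
  have "sech \<Theta> = 2 * a / (a\<^sup>2 + 1)" unfolding sech_def c by simp
  moreover have "exp (2 * \<Theta>) = a\<^sup>2" by (simp add: a_def exp_double)
  ultimately show ?thesis by (simp add: power2_eq_square)
qed

lemma a1': "(d::real) \<noteq> 0 \<Longrightarrow> (a/d)^2 - 1 = (a^2 - d^2)/d^2"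
  by (simp add: power_divide diff_divide_distrib)

lemma final_alg:
  fixes \<rho> A :: real
  assumes r0: "0 \<le> \<rho>" and r1: "\<rho> < 1" and A: "A > 0" and h: "(1 + \<rho>) / (1 - \<rho>) \<le> A"
  shows "1 - \<rho>\<^sup>2 \<ge> 4 * A / (A + 1)\<^sup>2"
proof -
  have d: "1 - \<rho> > 0" using r1 by simp
  have "1 + \<rho> \<le> A * (1 - \<rho>)" using h d by (simp add: pos_divide_le_eq)
  then have "\<rho> * (A + 1) \<le> A - 1" by (simp add: algebra_simps)
  then have rb: "\<rho> \<le> (A - 1) / (A + 1)" using A by (simp add: pos_le_divide_eq)
  have rr: "\<rho>\<^sup>2 \<le> ((A - 1) / (A + 1))\<^sup>2" by (rule power_mono[OF rb r0])
  have "((A - 1) / (A + 1))\<^sup>2 - 1 = ((A - 1)\<^sup>2 - (A + 1)\<^sup>2) / (A + 1)\<^sup>2"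
    by (rule a1') (use A in simp)
  moreover have "(A - 1)\<^sup>2 - (A + 1)\<^sup>2 = - (4 * A)" by (simp add: power2_eq_square algebra_simps)
  ultimately have "1 - ((A - 1) / (A + 1))\<^sup>2 = 4 * A / (A + 1)\<^sup>2" by simp
  with rr show ?thesis by linarith
qed

context sc begin

lemma SUP_m: "(SUP x. sqrt (max 0 (\<Delta>\<^sup>2 - q x))) = m"
proof -
  have "(SUP x. sqrt (max 0 (\<Delta>\<^sup>2 - q x))) = Sup (range s)" by (simp add: s_def)
  also have "\<dots> = m" by (rule cSup_eq_maximum) (auto simp: m_def s_le_m[unfolded m_def])
  finally show ?thesis .
qed

lemma final:
  assumes hint: "(\<lambda>x. sqrt (\<Delta>\<^sup>2 - q x)) integrable_on {x. q x < \<Delta>\<^sup>2}"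
  shows "(kp / km) * (cmod \<tau>)\<^sup>2 \<ge>
      (sech (ln (kp * km / \<Delta>\<^sup>2) / 2
             + (SUP x. sqrt (max 0 (\<Delta>\<^sup>2 - q x))) / \<Delta>
             + integral {x. q x < \<Delta>\<^sup>2} (\<lambda>x. sqrt (\<Delta>\<^sup>2 - q x))))\<^sup>2"
proof -
  note si = s_int[OF hint]
  define I where "I = integral UNIV s"
  define md where "md = m / \<Delta>"
  define \<Theta> where "\<Theta> = ln (kp * km / \<Delta>\<^sup>2) / 2 + md + I"
  have Dp: "\<Delta> > 0" using Delta_pos .
  have m0: "m \<ge> 0" unfolding m_def using s_nn .
  have lnk: "ln (kp * km / \<Delta>\<^sup>2) = ln kp + ln km - 2 * ln \<Delta>"
    using kp_pos km_pos Dp by (simp add: ln_div ln_mult ln_realpow)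
  have lm: "ln (\<Delta> + m) - ln \<Delta> \<le> md"
  proof -
    have "ln ((\<Delta> + m) / \<Delta>) = ln (\<Delta> + m) - ln \<Delta>"
      using Dp m0 by (intro ln_divide_pos) auto
    moreover have "(\<Delta> + m) / \<Delta> = 1 + m / \<Delta>" using Dp by (simp add: field_simps)
    ultimately have "ln (\<Delta> + m) - ln \<Delta> = ln (1 + m / \<Delta>)" by simp
    also have "\<dots> \<le> m / \<Delta>" using m0 Dp by (intro ln_add_one_self_le_self) simp
    finally show ?thesis by (simp add: md_def)
  qed
  have e2: "2 * \<Theta> = ln (kp * km / \<Delta>\<^sup>2) + 2 * md + 2 * I" unfolding \<Theta>_def by (simp add: distrib_left)
  have KT: "K \<le> 2 * \<Theta>" unfolding K_def I_def[symmetric] e2 lnk using lm by auto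
  have rb: "ln ((1 + \<rho>) / (1 - \<rho>)) \<le> 2 * \<Theta>" using rho_bound[OF si(1)] KT by simp
  have qp: "(1 + \<rho>) / (1 - \<rho>) > 0" using rho_nn rho_lt by simp
  have "(1 + \<rho>) / (1 - \<rho>) \<le> exp (2 * \<Theta>)"
    using rb qp by (metis exp_le_cancel_iff exp_ln)
  from final_alg[OF rho_nn rho_lt _ this]
  have "1 - \<rho>\<^sup>2 \<ge> (sech \<Theta>)\<^sup>2" unfolding sech_sq_exp by simp
  moreover have "(kp / km) * (cmod \<tau>)\<^sup>2 = 1 - \<rho>\<^sup>2"
    using top_facts(1) bot_facts(1) km_pos unfolding \<rho>_def by (simp add: field_simps)
  moreover have "\<Theta> = ln (kp * km / \<Delta>\<^sup>2) / 2
             + (SUP x. sqrt (max 0 (\<Delta>\<^sup>2 - q x))) / \<Delta>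
             + integral {x. q x < \<Delta>\<^sup>2} (\<lambda>x. sqrt (\<Delta>\<^sup>2 - q x))"
    unfolding \<Theta>_def SUP_m I_def si(2) md_def ..
  ultimately show ?thesis by simp
qed

end

theorem mainTheorem14:
  fixes q :: "real \<Rightarrow> real" and kp km x0 \<Delta> :: real
    and u u' :: "real \<Rightarrow> complex" and r \<tau> :: complex
  assumes kp_pos: "kp > 0" and km_pos: "km > 0"
    and lim_top: "(q \<longlongrightarrow> kp\<^sup>2) at_top"
    and lim_bot: "(q \<longlongrightarrow> km\<^sup>2) at_bot"
    and int_top: "\<exists>a. (\<lambda>x. q x - kp\<^sup>2) absolutely_integrable_on {a..}"
    and int_bot: "\<exists>a. (\<lambda>x. q x - km\<^sup>2) absolutely_integrable_on {..a}"
    and pC1: "q piecewise_C1_differentiable_on UNIV"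
    and noninc: "\<And>x y. x \<le> y \<Longrightarrow> y \<le> x0 \<Longrightarrow> q y \<le> q x"
    and nondec: "\<And>x y. x0 \<le> x \<Longrightarrow> x \<le> y \<Longrightarrow> q x \<le> q y"
    and Delta_pos: "\<Delta> > 0"
    and Delta_lo: "q x0 \<le> \<Delta>\<^sup>2"
    and Delta_hi: "\<Delta>\<^sup>2 \<le> min (kp\<^sup>2) (km\<^sup>2)"
    and u_deriv: "\<And>x. (u has_vector_derivative u' x) (at x)"
    and u'_deriv: "\<And>x. (u' has_vector_derivative (- (complex_of_real (q x) * u x))) (at x)"
    and asym_bot: "((\<lambda>x. u x - (exp (\<i> * complex_of_real (km * x))
                        + r * exp (- \<i> * complex_of_real (km * x)))) \<longlongrightarrow> 0) at_bot"
    and asym_top: "((\<lambda>x. u x - \<tau> * exp (\<i> * complex_of_real (kp * x))) \<longlongrightarrow> 0) at_top"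
  shows "(\<lambda>x. sqrt (\<Delta>\<^sup>2 - q x)) integrable_on {x. q x < \<Delta>\<^sup>2} \<longrightarrow>
    (kp / km) * (cmod \<tau>)\<^sup>2 \<ge>
      (sech (ln (kp * km / \<Delta>\<^sup>2) / 2
             + (SUP x. sqrt (max 0 (\<Delta>\<^sup>2 - q x))) / \<Delta>
             + integral {x. q x < \<Delta>\<^sup>2} (\<lambda>x. sqrt (\<Delta>\<^sup>2 - q x))))\<^sup>2"
proof
  assume hint: "(\<lambda>x. sqrt (\<Delta>\<^sup>2 - q x)) integrable_on {x. q x < \<Delta>\<^sup>2}"
  interpret S: sc q kp km x0 \<Delta> u u' r \<tau>
    by (rule sc.intro) (fact kp_pos km_pos lim_top lim_bot pC1 noninc nondec Delta_pos Delta_lo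
        Delta_hi u_deriv u'_deriv asym_bot asym_top)+
  show "(kp / km) * (cmod \<tau>)\<^sup>2 \<ge>
      (sech (ln (kp * km / \<Delta>\<^sup>2) / 2
             + (SUP x. sqrt (max 0 (\<Delta>\<^sup>2 - q x))) / \<Delta>
             + integral {x. q x < \<Delta>\<^sup>2} (\<lambda>x. sqrt (\<Delta>\<^sup>2 - q x))))\<^sup>2"
    by (rule S.final[OF hint])
qed


end
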